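(* Let $m$ be a positive integer, $r\equiv 1\pmod 4$ a prime, and $p$ a prime whose multiplicative order modulo $r^m$ is $\phi(r^m)/2$. Let $q=p^{\phi(r^m)/2}$ and $f(x)=\mathrm{Tr}_{q/p}\big(x^{(q-1)/r^m}\big)$ for $x\in\mathbb{F}_q$. Then: (i) the partition $\{D^*_{f,i}\}_{i\in f(\mathbb{F}_q^* )}$ induces a $2$-class association scheme if and only if $|f(\mathbb{F}_q^* )|=2$, and this holds if and only if $r\equiv 1\pmod p$; (ii) it induces a $3$-class association scheme if and only if $|f(\mathbb{F}_q^* )|=3$, and this holds if and only if $r\not\equiv1\pmod p$ and $m=1$; (iii) it induces a $4$-class association scheme if and only if $|f(\mathbb{F}_q^* )|=4$, and this holds if and only if $r\not\equiv1\pmod p$ and $m>1$.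
   Context: $\phi$ is Euler's function and $\mathrm{Tr}_{q/p}$ the trace from $\mathbb{F}_q$ to $\mathbb{F}_p$. For $i\in\mathbb{F}_p$, $D_{f,i}=\{x\in\mathbb{F}_q:f(x)=i\}$, $D^*_{f,i}=D_{f,i}\setminus\{0\}$, $f(\mathbb{F}_q^* )=\{f(x):x\ne0\}$. Relations on $\mathbb{F}_q$: the diagonal $R_{-1}$, and for $i\in f(\mathbb{F}_q^* )$, $(\alpha,\beta)\in R_i$ iff $\alpha-\beta\in D^*_{f,i}$. The partition induces a $d$-class association scheme if these relations form a symmetric association scheme on $\mathbb{F}_q$ (each relation symmetric, and for any three relations $R_a,R_b,R_c$ the number $|\{w:(u,w)\in R_a,(w,v)\in R_b\}|$ is constant over $(u,v)\in R_c$) and $d=|f(\mathbb{F}_q^* )|$. *)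

theory Defs
  imports "HOL-Number_Theory.Number_Theory"
begin

definition trace_Fp :: "nat \<Rightarrow> nat \<Rightarrow> 'a::field \<Rightarrow> 'a" where
  "trace_Fp p k y = (\<Sum>j<k. y ^ (p ^ j))"

text \<open>Relations of the partition: None is the diagonal R_{-1};
  Some i is R_i = {(a,b). a - b in D*_{f,i}}.\<close>
definition scheme_rel :: "('a::ab_group_add \<Rightarrow> 'b) \<Rightarrow> 'b option \<Rightarrow> ('a \<times> 'a) set" where
  "scheme_rel f c = (case c of None \<Rightarrow> Id
      | Some i \<Rightarrow> {(a, b). a - b \<noteq> 0 \<and> f (a - b) = i})"

definition scheme_idx :: "('a::ab_group_add \<Rightarrow> 'b) \<Rightarrow> 'b option set" where
  "scheme_idx f = insert None (Some ` (f ` (UNIV - {0})))"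

definition induces_assoc_scheme :: "('a::{finite,ab_group_add} \<Rightarrow> 'b) \<Rightarrow> nat \<Rightarrow> bool" where
  "induces_assoc_scheme f d \<longleftrightarrow>
     (\<forall>a\<in>scheme_idx f. sym (scheme_rel f a)) \<and>
     (\<forall>a\<in>scheme_idx f. \<forall>b\<in>scheme_idx f. \<forall>c\<in>scheme_idx f. \<exists>n::nat.
        \<forall>u v. (u, v) \<in> scheme_rel f c \<longrightarrow>
          card {w. (u, w) \<in> scheme_rel f a \<and> (w, v) \<in> scheme_rel f b} = n) \<and>
     d = card (f ` (UNIV - {0}))"

end

theory Submission
  imports Defs "HOL-Computational_Algebra.Polynomial"
begin

lemma fin_field_pow_card:
  fixes x :: "'a::{finite,field}"
  shows "x ^ card (UNIV :: 'a set) = x"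
proof (cases "x = 0")
  case False
  have "x * (\<Prod>y\<in>UNIV-{0}. x * y) = x * x ^ (card (UNIV :: 'a set) - 1) * \<Prod>(UNIV-{0})"
    by (simp add: prod.distrib mult_ac)
  also have "x * x ^ (card (UNIV :: 'a set) - 1) = x ^ Suc (card (UNIV :: 'a set) - 1)"
    by (subst power_Suc) auto
  also have "Suc (card (UNIV :: 'a set) - 1) = card (UNIV :: 'a set)"
    using finite_UNIV_card_ge_0[where ?'a = 'a] by simp
  also have "(\<Prod>y\<in>UNIV-{0}. x * y) = (\<Prod>y\<in>UNIV-{0}. y)"
    by (rule prod.reindex_bij_witness[of _ "\<lambda>y. y / x" "\<lambda>y. x * y"]) (use False in auto)
  finally show ?thesis
    by simp
qed (use finite_UNIV_card_ge_0[where ?'a = 'a] in auto)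

lemma fin_field_pow_card_minus1:
  fixes x :: "'a::{finite,field}"
  assumes "x \<noteq> 0"
  shows "x ^ (card (UNIV :: 'a set) - 1) = 1"
proof -
  have c: "card (UNIV :: 'a set) = Suc (card (UNIV :: 'a set) - 1)"
    using finite_UNIV_card_ge_0[where ?'a = 'a] by simp
  have "x * x ^ (card (UNIV :: 'a set) - 1) = x * 1"
    using fin_field_pow_card[of x] by (metis c power_Suc mult_1_right)
  thus ?thesis using assms by simp
qed

lemma pow_eq_1_gcd:
  fixes z :: "'a::field"
  assumes "z ^ a = 1" "z ^ b = 1"
  shows "z ^ gcd a b = 1"
proof (cases "a = 0")
  case True thus ?thesis using assms by simp
next
  case False
  then obtain x y where xy: "a * x = b * y + gcd a b" using bezout_nat by blast
  have "1 = z ^ (a * x)" by (simp add: power_mult assms)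
  also have "\<dots> = z ^ (b*y) * z ^ gcd a b" by (simp add: xy power_add)
  also have "\<dots> = z ^ gcd a b" by (simp add: power_mult assms)
  finally show ?thesis by simp
qed

lemma pow_eq_1_primepow:
  fixes z :: "'a::field"
  assumes "prime r" "z ^ (r ^ j) = 1" "z ^ (r ^ (j - 1)) \<noteq> 1" "j > 0" "z ^ a = 1"
  shows "r ^ j dvd a"
proof -
  have g: "z ^ gcd a (r^j) = 1" using pow_eq_1_gcd assms by blast
  have "gcd a (r^j) dvd r ^ j" by simp
  then obtain i where i: "i \<le> j" "gcd a (r^j) = r ^ i" using divides_primepow_nat[OF assms(1)] by blast
  show ?thesis
  proof (cases "i = j")
    case True thus ?thesis using i by (metis gcd_dvd1)
  next
    case False
    hence "i \<le> j - 1" using i by simp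
    then have "r ^ (j-1) = r ^ i * r ^ (j - 1 - i)" by (metis le_add_diff_inverse power_add)
    hence "z ^ (r ^ (j-1)) = 1" using g i by (simp add: power_mult)
    thus ?thesis using assms by simp
  qed
qed

lemma geom_root_sum:
  fixes w :: "'a::field"
  assumes "w ^ n = 1" "w \<noteq> 1"
  shows "(\<Sum>i<n. w ^ i) = 0"
  using assms by (simp add: sum_gp_strict)

lemma lift_cong:
  fixes a r j :: nat
  assumes "prime r" "j > 0" "[a = 1] (mod r ^ j)"
  shows "[a ^ r = 1] (mod r ^ Suc j)"
proof -
  have a1: "a \<ge> 1" using assms
    by (metis One_nat_def cong_0_1_nat' cong_less_modulus_unique_nat cong_sym less_one not_less
        one_less_power prime_gt_1_nat zero_less_iff_neq_zero zero_power)
  have "int (r ^ j) dvd int a - 1" using assms(3) a1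
    by (metis cong_iff_dvd_diff cong_int_iff cong_sym int_ops(2))
  moreover have "int r dvd (\<Sum>i<r. (int a)^i)"
  proof -
    have "[(\<Sum>i<r. (int a)^i) = (\<Sum>i<r. 1)] (mod int r)"
    proof (rule cong_sum)
      fix i assume "i \<in> {..<r}"
      have "[int a = 1] (mod int r)"
        using assms(3) assms(2) by (metis cong_dvd_modulus_nat cong_int_iff dvd_power
            of_nat_1 zero_less_iff_neq_zero)
      thus "[(int a)^i = 1] (mod int r)" using cong_pow by fastforce
    qed
    hence "int r dvd (\<Sum>i<r. (int a)^i) - int r" by (simp add: cong_iff_dvd_diff)
    hence "int r dvd ((\<Sum>i<r. (int a)^i) - int r) + int r" by (intro dvd_add) auto
    thus ?thesis by simp
  qed
  ultimately have "int (r^j) * int r dvd (int a - 1) * (\<Sum>i<r. (int a)^i)"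
    by (rule mult_dvd_mono)
  hence "int (r ^ Suc j) dvd (int a)^r - 1"
    by (simp add: power_diff_1_eq mult.commute)
  thus ?thesis
    by (metis cong_iff_dvd_diff cong_int_iff int_ops(2) of_nat_power)
qed

lemma lift_cong_iter:
  fixes a r j :: nat
  assumes "prime r" "j > 0" "[a = 1] (mod r ^ j)"
  shows "[a ^ (r ^ i) = 1] (mod r ^ (j + i))"
proof (induction i)
  case 0 thus ?case using assms by simp
next
  case (Suc i)
  have "[(a ^ r ^ i) ^ r = 1] (mod r ^ Suc (j + i))"
    by (rule lift_cong[OF assms(1) _ Suc]) (use assms in simp)
  thus ?case by (simp add: power_mult[symmetric] mult.commute)
qed

locale fctx =
  fixes p r m :: nat and f :: "'a::{finite,field} \<Rightarrow> 'a"
  assumes m_pos: "m > 0" and r_prime: "prime r" and r_mod: "r mod 4 = 1" and p_prime: "prime p"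
    and ord_p: "ord (r ^ m) p = totient (r ^ m) div 2"
    and card_a: "card (UNIV::'a set) = p ^ (totient (r ^ m) div 2)"
    and f_def: "f = (\<lambda>x. trace_Fp p (totient (r ^ m) div 2) (x ^ ((card (UNIV::'a set) - 1) div r ^ m)))"
begin

definition k where "k = totient (r^m) div 2"
definition e where "e = (r - 1) div 2"
definition Q where "Q = p ^ (k div 2)"

lemma r_ge5: "r \<ge> 5"
proof -
  have "r \<ge> 2" using r_prime prime_ge_2_nat by blast
  moreover have "r \<noteq> 2" "r \<noteq> 3" "r \<noteq> 4" using r_mod by auto
  ultimately show ?thesis using r_mod by presburger
qed

lemma r_e: "r - 1 = 2 * e" and e_even: "even e" and e_ge2: "e \<ge> 2"
  using r_mod r_ge5 unfolding e_def by presburger+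

lemma p_ge2: "p \<ge> 2" using p_prime prime_ge_2_nat by blast

lemma tot: "totient (r^m) = r^(m-1) * (r - 1)"
  using totient_prime_power[OF r_prime m_pos] .

lemma k_eq: "k = r^(m-1) * e"
  unfolding k_def tot r_e by simp

lemma k_pos: "k > 0"
  using k_eq e_ge2 r_ge5 by simp

lemma k_even: "even k" using k_eq e_even by simp

lemma ord_k: "ord (r^m) p = k" using ord_p k_def by simp

lemma coprime_rp: "coprime (r^m) p"
  using ord_k k_pos ord_eq_0 by (metis not_gr0)

lemma p_not_r: "\<not> r dvd p"
proof
  assume a: "r dvd p"
  have "coprime r p" using coprime_rp m_pos by simp
  hence "is_unit r" using a coprime_absorb_left by blast
  thus False using r_prime by simp
qed

lemma p_neq_r: "p \<noteq> r" using p_not_r by auto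

lemma r_not_p: "\<not> p dvd r"
  using p_neq_r r_prime p_prime primes_dvd_imp_eq by blast

lemma cong_k_iff: "[p ^ d = 1] (mod r^m) \<longleftrightarrow> k dvd d"
  using ord_divides ord_k by metis

lemma cong_k_r: "[p ^ k = 1] (mod r)"
proof -
  have "[p ^ k = 1] (mod r^m)" using cong_k_iff by simp
  thus ?thesis using m_pos by (metis cong_dvd_modulus_nat dvd_power)
qed

lemma ord_r: "ord r p = e"
proof -
  define o1 where "o1 = ord r p"
  have cop: "coprime r p" using coprime_rp m_pos by (metis coprime_power_left_iff not_gr0)
  have o1pos: "o1 > 0" using cop o1_def by simp
  have "[p ^ (r - 1) = 1] (mod r)" using fermat_theorem[OF r_prime p_not_r] .
  hence d1: "o1 dvd r - 1" using ord_divides o1_def by metis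
  have "o1 dvd k" using cong_k_r ord_divides o1_def by metis
  hence d2: "o1 dvd r^(m-1) * e" using k_eq by simp
  have "coprime o1 r"
  proof -
    have rr: "r = Suc (r - 1)" using r_ge5 by simp
    have "coprime (r - 1) (Suc (r - 1))" by simp
    hence "coprime (r - 1) r" using rr by metis
    thus ?thesis using d1 coprime_imp_coprime dvd_trans by blast
  qed
  hence "coprime o1 (r^(m-1))" by simp
  hence de: "o1 dvd e" using d2 coprime_dvd_mult_right_iff by blast
  have c1: "[p ^ o1 = 1] (mod r ^ 1)" using ord o1_def by simp
  have "[(p ^ o1) ^ (r ^ (m-1)) = 1] (mod r ^ (1 + (m-1)))"
    using lift_cong_iter[OF r_prime _ c1, of "m-1"] by simp
  hence "[p ^ (o1 * r^(m-1)) = 1] (mod r ^ m)" using m_pos by (simp add: power_mult)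
  hence "k dvd o1 * r^(m-1)" using cong_k_iff by blast
  hence "r^(m-1) * e \<le> o1 * r^(m-1)" using k_eq o1pos r_ge5 by (simp add: dvd_imp_le)
  hence "e \<le> o1" using r_ge5 by simp
  thus ?thesis using de e_ge2 o1_def by (simp add: dvd_imp_le le_antisym)
qed

lemma p_e_cong: "[p ^ e = 1] (mod r)" using ord ord_r by metis

lemma p_pow_cong_r_iff: "[p ^ d = 1] (mod r) \<longleftrightarrow> e dvd d"
  using ord_divides ord_r by metis

lemma level_exists:
  assumes "2 \<le> j" "j \<le> m"
  shows "\<exists>d. [p ^ d = 1] (mod r^(j-1)) \<and> \<not> [p ^ d = 1] (mod r^j)"
proof (rule ccontr)
  assume "\<not> ?thesis"
  define d where "d = ord (r^(j-1)) p"
  have c1: "[p ^ d = 1] (mod r^(j-1))" using ord d_def by blast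
  with \<open>\<not> ?thesis\<close> have c2: "[p ^ d = 1] (mod r^j)" by blast
  have cop: "coprime p (r^(j-1))" using coprime_rp
    by (metis coprime_commute coprime_power_left_iff m_pos not_gr0 coprime_power_right_iff
        bot_nat_0.not_eq_extremum coprime_power_left_iff)
  have dpos: "d > 0" using cop d_def by (simp add: coprime_commute)
  have "[p ^ totient (r^(j-1)) = 1] (mod r^(j-1))" using euler_theorem[OF cop] .
  hence "d dvd totient (r^(j-1))" using ord_divides d_def by metis
  hence "d dvd r^(j-2) * (r - 1)" using totient_prime_power[OF r_prime, of "j-1"] assms
    by (simp add: diff_diff_add numeral_2_eq_2)
  hence dle: "d \<le> r^(j-2) * (r - 1)" using r_ge5 by (simp add: dvd_imp_le)
  have "[(p ^ d) ^ (r ^ (m - j)) = 1] (mod r ^ (j + (m - j)))"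
    using lift_cong_iter[OF r_prime _ c2, of "m-j"] assms by simp
  hence "[p ^ (d * r^(m-j)) = 1] (mod r ^ m)" using assms by (simp add: power_mult)
  hence "k dvd d * r^(m-j)" using cong_k_iff by blast
  hence "k \<le> d * r^(m-j)" using dpos r_ge5 by (simp add: dvd_imp_le)
  also have "\<dots> \<le> r^(j-2) * (r - 1) * r^(m-j)" using dle by simp
  also have "\<dots> = r^(m-2) * (r - 1)"
  proof -
    have "r^(j-2) * r^(m-j) = r^(m-2)" using assms by (simp flip: power_add)
    thus ?thesis by (metis mult.assoc mult.commute)
  qed
  finally have "r^(m-1) * e \<le> r^(m-2) * (2 * e)" using k_eq r_e by simp
  moreover have "r^(m-1) = r * r^(m-2)"
  proof -
    have "m - 1 = Suc (m - 2)" using assms by simp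
    thus ?thesis by simp
  qed
  ultimately have "r * (r^(m-2) * e) \<le> 2 * (r^(m-2) * e)" by (simp add: mult_ac)
  moreover have "r^(m-2) * e > 0" using e_ge2 r_ge5 by simp
  ultimately show False using r_ge5 by simp
qed

lemma Q_sq: "Q * Q = p ^ k"
  using k_even unfolding Q_def by (metis dvd_mult_div_cancel mult_2 power_add)

lemma N_dvd_Q1: "r^m dvd Q + 1"
proof -
  have "[p ^ k = 1] (mod r^m)" using cong_k_iff by simp
  moreover have "p^k \<ge> 1" using p_ge2 by simp
  ultimately have "r^m dvd p^k - 1" using cong_altdef_nat by blast
  moreover have Q1: "Q \<ge> 1" unfolding Q_def using p_ge2 by simp
  moreover have "(Q - 1) * (Q + 1) = Q * Q - 1" using Q1 by (cases Q) (auto simp: algebra_simps)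
  ultimately have d: "r^m dvd (Q - 1) * (Q + 1)" using Q_sq by simp
  show ?thesis
  proof (cases "r dvd Q + 1")
    case True
    have "\<not> r dvd Q - 1"
    proof
      assume "r dvd Q - 1"
      hence "r dvd (Q + 1) - (Q - 1)" using True dvd_diff_nat by blast
      hence "r dvd 2" using Q1 by simp
      thus False using r_ge5 dvd_imp_le[of r 2] by simp
    qed
    hence "coprime (r^m) (Q - 1)" using r_prime by (simp add: prime_imp_coprime)
    thus ?thesis using d coprime_dvd_mult_right_iff by blast
  next
    case False
    hence "coprime (r^m) (Q + 1)" using r_prime by (simp add: prime_imp_coprime)
    hence "r^m dvd Q - 1" using d coprime_dvd_mult_left_iff by blast
    hence "[Q = 1] (mod r^m)" using Q1 cong_altdef_nat by blast
    hence "k dvd k div 2" using cong_k_iff Q_def by simp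
    moreover have "k div 2 > 0" using k_pos k_even by (metis dvd_div_eq_0_iff dvd_refl gr0I neq0_conv)
    ultimately have "k \<le> k div 2" by (simp add: dvd_imp_le)
    hence False using k_pos by simp
    thus ?thesis ..
  qed
qed

end

context fctx begin

lemma card_q: "card (UNIV::'a set) = p ^ k" using card_a k_def by simp

lemma CHAR_p: "CHAR('a) = p"
proof -
  have fin: "finite (UNIV::'a set)" by simp
  have pos: "CHAR('a) > 0" using finite_imp_CHAR_pos[OF fin] .
  have pr: "prime CHAR('a)" using prime_CHAR_semidom[OF pos] .
  have "CHAR('a) dvd p ^ k" using CHAR_dvd_CARD[where 'a='a] card_q by simp
  hence "CHAR('a) dvd p" using pr prime_dvd_power by blast
  thus ?thesis using pr p_prime primes_dvd_imp_eq by blast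
qed

lemma prime_CHAR: "prime CHAR('a)" using CHAR_p p_prime by simp

lemma of_nat_eq0: "(of_nat n :: 'a) = 0 \<longleftrightarrow> p dvd n"
  using of_nat_eq_0_iff_char_dvd CHAR_p by metis

lemma frob_add: "((x::'a) + y) ^ (p ^ j) = x ^ (p ^ j) + y ^ (p ^ j)"
  using freshmans_dream'[OF prime_CHAR, of "p^j" j] CHAR_p by simp

lemma frob_sum: "(sum (g :: 'b \<Rightarrow> 'a) A) ^ (p ^ j) = (\<Sum>i\<in>A. g i ^ (p ^ j))"
  using freshmans_dream_sum'[OF prime_CHAR, of "p^j" j] CHAR_p by simp

lemma frob_minus: "(- (x::'a)) ^ (p ^ j) = - (x ^ (p ^ j))"
proof -
  have "p ^ j > 0" using p_ge2 by simp
  hence "0 = x ^ (p^j) + (-x) ^ (p^j)" using frob_add[of x "-x" j] zero_power[of "p^j"] by (metis add.right_inverse)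
  thus ?thesis by (simp add: eq_neg_iff_add_eq_0 add.commute)
qed

lemma pow_q: "(x::'a) ^ (p ^ k) = x" using fin_field_pow_card[of x] card_q by simp

lemma pow_q1: "(x::'a) \<noteq> 0 \<Longrightarrow> x ^ (p ^ k - 1) = 1" using fin_field_pow_card_minus1[of x] card_q by simp

definition Tr :: "'a \<Rightarrow> 'a" where "Tr y = trace_Fp p k y"

lemma Tr_def2: "Tr y = (\<Sum>j<k. y ^ (p ^ j))" unfolding Tr_def trace_Fp_def ..

lemma f_eq: "f x = Tr (x ^ ((p ^ k - 1) div r ^ m))"
  using f_def k_def card_q Tr_def by simp

lemma Tr_sum: "Tr (sum g A) = (\<Sum>i\<in>A. Tr (g i))"
  unfolding Tr_def2 frob_sum by (rule sum.swap)

lemma Tr_add: "Tr (x + y) = Tr x + Tr y"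
  unfolding Tr_def2 frob_add by (simp add: sum.distrib)

lemma Tr_zero: "Tr 0 = 0"
proof -
  have "\<And>j. p ^ j > 0" using p_ge2 by simp
  thus ?thesis unfolding Tr_def2 by (simp add: zero_power)
qed

lemma Tr_one: "Tr 1 = of_nat k"
  unfolding Tr_def2 by simp

lemma Tr_frob: "Tr (y ^ p) = Tr y"
proof -
  obtain k' where kk: "k = Suc k'" using k_pos by (cases k) auto
  have "Tr (y ^ p) = (\<Sum>j<k. y ^ (p ^ Suc j))"
    unfolding Tr_def2 by (simp add: power_mult[symmetric] mult.commute)
  also have "\<dots> = (\<Sum>j<k'. y ^ (p ^ Suc j)) + y ^ (p ^ k)"
    unfolding kk by (simp only: sum.lessThan_Suc)
  also have "y ^ (p ^ k) = y" by (rule pow_q)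
  also have "(\<Sum>j<k'. y ^ (p ^ Suc j)) + y = (\<Sum>j<k. y ^ (p ^ j))"
    unfolding kk by (simp only: sum.lessThan_Suc_shift) simp
  finally show ?thesis unfolding Tr_def2 .
qed

lemma Tr_frob_pow: "Tr (y ^ (p ^ d)) = Tr y"
proof (induction d)
  case 0 thus ?case by simp
next
  case (Suc d)
  have "y ^ (p ^ Suc d) = (y ^ (p ^ d)) ^ p" by (simp add: power_mult[symmetric] mult.commute)
  thus ?case using Tr_frob Suc by simp
qed

lemma Tr_pow_p: "(Tr y) ^ p = Tr y"
proof -
  have "(Tr y) ^ (p ^ 1) = (\<Sum>j<k. (y ^ (p ^ j)) ^ (p ^ 1))" unfolding Tr_def2 by (rule frob_sum)
  also have "\<dots> = Tr (y ^ p)" unfolding Tr_def2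
    by (simp add: power_mult[symmetric] mult.commute)
  finally show ?thesis using Tr_frob by simp
qed

end

context fctx begin

definition E :: "'a set" where "E = {x. x ^ Q = x}"

lemma Q_pow: "Q = p ^ (k div 2)" by (simp add: Q_def)

lemma Q_pos: "Q > 0" using p_ge2 Q_def by simp

lemma E_0: "0 \<in> E" and E_1: "1 \<in> E"
  using Q_pos unfolding E_def by (auto simp: zero_power)

lemma E_add: "a \<in> E \<Longrightarrow> b \<in> E \<Longrightarrow> a + b \<in> E"
  unfolding E_def Q_pow using frob_add by simp

lemma E_mult: "a \<in> E \<Longrightarrow> b \<in> E \<Longrightarrow> a * b \<in> E"
  unfolding E_def by (simp add: power_mult_distrib)

lemma E_uminus: "a \<in> E \<Longrightarrow> - a \<in> E"
  unfolding E_def Q_pow using frob_minus by simp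

lemma E_diff: "a \<in> E \<Longrightarrow> b \<in> E \<Longrightarrow> a - b \<in> E"
  using E_add E_uminus by (metis diff_conv_add_uminus)

lemma E_inverse: "a \<in> E \<Longrightarrow> inverse a \<in> E"
  unfolding E_def by (simp add: power_inverse)

lemma E_divide: "a \<in> E \<Longrightarrow> b \<in> E \<Longrightarrow> a / b \<in> E"
  using E_mult E_inverse by (simp add: divide_inverse)

lemma pow_QQ: "(x::'a) ^ (Q * Q) = x" using pow_q Q_sq by simp

lemma card_E_ge: "card E \<ge> Q"
proof -
  define g where "g = (\<lambda>x::'a. x ^ (Q + 1))"
  define S where "S = (UNIV - {0::'a})"
  have img: "g ` S \<subseteq> E - {0}"
  proof
    fix y assume "y \<in> g ` S"
    then obtain x where x: "x \<noteq> 0" "y = x ^ (Q+1)" unfolding g_def S_def by auto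
    have "y ^ Q = x ^ (Q * Q) * x ^ Q" unfolding x by (simp add: power_mult[symmetric] algebra_simps power_add)
    also have "\<dots> = y" using pow_QQ x by simp
    finally show "y \<in> E - {0}" using x unfolding E_def by simp
  qed
  have fib: "card {x \<in> S. g x = c} \<le> Q + 1" for c
  proof -
    define P where "P = monom (1::'a) (Q+1) + [:-c:]"
    have degP: "degree P = Q + 1" unfolding P_def
      by (subst degree_add_eq_left) (auto simp: degree_monom_eq)
    hence "P \<noteq> 0" by auto
    hence "card {x. poly P x = 0} \<le> Q + 1" using card_poly_roots_bound degP by metis
    moreover have "{x \<in> S. g x = c} \<subseteq> {x. poly P x = 0}"
      unfolding P_def g_def by (auto simp: poly_monom)
    moreover have "finite {x. poly P x = 0}" by simp
    ultimately show ?thesis by (meson card_mono le_trans)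
  qed
  have "S = (\<Union>c\<in>g ` S. {x \<in> S. g x = c})" by auto
  hence "card S \<le> (\<Sum>c\<in>g ` S. card {x \<in> S. g x = c})" by (metis card_UN_le finite)
  also have "\<dots> \<le> card (g ` S) * (Q + 1)" using sum_bounded_above[of "g ` S" "\<lambda>c. card {x \<in> S. g x = c}" "Q+1"] fib by simp
  finally have c1: "card S \<le> card (g ` S) * (Q + 1)" .
  have "card S = Q * Q - 1" unfolding S_def using card_q Q_sq by (simp add: card_Diff_singleton)
  moreover have "(Q - 1) * (Q + 1) = Q * Q - 1" using Q_pos by (cases Q) (auto simp: algebra_simps)
  ultimately have "(Q - 1) * (Q + 1) \<le> card (g ` S) * (Q + 1)" using c1 by simp
  hence "Q - 1 \<le> card (g ` S)" using mult_le_cancel2[of "Q - 1" "Q+1" "card (g ` S)"] by simp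
  also have "\<dots> \<le> card (E - {0})" using img by (simp add: card_mono)
  also have "\<dots> = card E - 1" using E_0 by (simp add: card_Diff_singleton)
  finally have "Q - 1 \<le> card E - 1" .
  moreover have "card E \<ge> 1" using E_0 by (metis One_nat_def Suc_leI card_gt_0_iff empty_iff finite)
  ultimately show ?thesis by arith
qed

lemma card_E_ge2: "card E \<ge> 2"
proof -
  have "k div 2 \<ge> 1" using k_pos k_even by auto
  hence "p ^ 1 \<le> p ^ (k div 2)" using p_ge2 by (intro power_increasing) auto
  hence "Q \<ge> 2" unfolding Q_def using p_ge2 by simp
  thus ?thesis using card_E_ge by simp
qed

lemma two_dim:
  assumes "x \<noteq> 0" "y \<noteq> 0" "\<forall>c\<in>E. x \<noteq> c * y"
  shows "\<exists>a\<in>E. \<exists>b\<in>E. u = a * x + b * y"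
proof -
  define g where "g = (\<lambda>(a,b). a * x + b * y)"
  have inj: "inj_on g (E \<times> E)"
  proof (rule inj_onI)
    fix ab ab' assume ab: "ab \<in> E \<times> E" "ab' \<in> E \<times> E" "g ab = g ab'"
    obtain a b a' b' where ab_eq: "ab = (a,b)" "ab' = (a',b')" by (cases ab, cases ab') auto
    have mem: "a \<in> E" "b \<in> E" "a' \<in> E" "b' \<in> E" using ab ab_eq by auto
    have eq: "(a - a') * x = (b' - b) * y" using ab(3) ab_eq unfolding g_def by (simp add: algebra_simps)
    have "a = a'"
    proof (rule ccontr)
      assume "a \<noteq> a'"
      hence "x = ((b' - b) / (a - a')) * y" using eq by (simp add: field_simps)
      moreover have "(b' - b) / (a - a') \<in> E" using mem E_diff E_divide by simp
      ultimately show False using assms(3) by blast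
    qed
    moreover hence "b = b'" using eq assms(2) by simp
    ultimately show "ab = ab'" using ab_eq by simp
  qed
  have "card (g ` (E \<times> E)) = card E * card E" using card_image[OF inj] by (simp add: card_cartesian_product)
  also have "\<dots> \<ge> Q * Q" using card_E_ge by (simp add: mult_le_mono)
  finally have "card (g ` (E \<times> E)) \<ge> card (UNIV :: 'a set)" using card_q Q_sq by simp
  hence "g ` (E \<times> E) = UNIV" by (metis card_seteq finite subset_UNIV)
  hence "u \<in> g ` (E \<times> E)" by simp
  thus ?thesis unfolding g_def by auto
qed

end

context fctx begin

definition line :: "'a \<Rightarrow> 'a set" where "line u = (\<lambda>c. c * u) ` E"
definition Ez :: "'a set" where "Ez = E - {0}"
definition invar :: "'a set \<Rightarrow> bool" where "invar S \<longleftrightarrow> (\<forall>c\<in>E. \<forall>x\<in>S. c \<noteq> 0 \<longrightarrow> c * x \<in> S)"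

lemma line_iff: "x \<in> line u \<longleftrightarrow> (\<exists>c\<in>E. x = c * u)"
  unfolding line_def by auto

lemma invar_line: "invar (line u)"
  unfolding invar_def
proof (intro ballI impI)
  fix c x assume c: "c \<in> E" and x: "x \<in> line u"
  then obtain d where d: "d \<in> E" "x = d * u" using line_iff by blast
  hence "c * x = (c * d) * u" by simp
  thus "c * x \<in> line u" using E_mult[OF c d(1)] line_iff by blast
qed

lemma invar_mem_iff:
  assumes "invar S" "c \<in> E" "c \<noteq> 0"
  shows "c * x \<in> S \<longleftrightarrow> x \<in> S"
proof
  assume "c * x \<in> S"
  hence "inverse c * (c * x) \<in> S" using assms E_inverse unfolding invar_def by simp
  thus "x \<in> S" using assms by (simp add: field_simps)
qed (use assms in \<open>auto simp: invar_def\<close>)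

lemma invar_diff: "invar S \<Longrightarrow> invar L \<Longrightarrow> invar (S - L)"
  unfolding invar_def using invar_mem_iff by (metis DiffD1 DiffD2 DiffI invar_def)

lemma invar_Int: "invar S \<Longrightarrow> invar L \<Longrightarrow> invar (S \<inter> L)"
  unfolding invar_def by blast

lemma card_Ez: "card Ez = card E - 1" unfolding Ez_def using E_0 by (simp add: card_Diff_singleton)

lemma card_scaled:
  assumes "(u::'a) \<noteq> 0" shows "card ((\<lambda>c. c * u) ` A) = card A"
  using assms by (auto intro!: card_image inj_onI)

lemma inter_line:
  assumes "invar S" "0 \<notin> S" "u \<noteq> 0"
  shows "S \<inter> line u = (if u \<in> S then (\<lambda>c. c * u) ` Ez else {})"
proof (cases "u \<in> S")
  case True
  have "S \<inter> line u = (\<lambda>c. c * u) ` Ez"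
  proof
    show "S \<inter> line u \<subseteq> (\<lambda>c. c * u) ` Ez"
      using assms unfolding line_def Ez_def by auto
    show "(\<lambda>c. c * u) ` Ez \<subseteq> S \<inter> line u"
      using assms True unfolding line_def Ez_def invar_def by auto
  qed
  thus ?thesis using True by simp
next
  case False
  have "S \<inter> line u = {}"
  proof (rule ccontr)
    assume "S \<inter> line u \<noteq> {}"
    then obtain c where c: "c \<in> E" "c * u \<in> S" unfolding line_def by auto
    hence "c \<noteq> 0" using assms by auto
    thus False using invar_mem_iff[OF assms(1) c(1)] c False by simp
  qed
  thus ?thesis using False by simp
qed

lemma card_diff_line:
  assumes "invar S" "0 \<notin> S" "u \<noteq> 0"
  shows "card (S - line u) + (if u \<in> S then card E - 1 else 0) = card S"
proof -
  have "card (S \<inter> line u) = (if u \<in> S then card E - 1 else 0)"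
    using inter_line[OF assms] card_scaled[OF assms(3)] card_Ez by simp
  moreover have "card (S - line u) + card (S \<inter> line u) = card S"
  proof -
    have "card (S - line u) = card S - card (S \<inter> line u)" by (simp add: card_Diff_subset_Int)
    moreover have "card (S \<inter> line u) \<le> card S" by (simp add: card_mono)
    ultimately show ?thesis by simp
  qed
  ultimately show ?thesis by simp
qed

lemma line_closed: "x \<in> line u \<Longrightarrow> c \<in> E \<Longrightarrow> c * x \<in> line u"
  using invar_line unfolding invar_def by (cases "c = 0") (auto simp: line_iff E_0)

lemma line_sym:
  assumes "u \<noteq> 0" "y \<noteq> 0" "y \<in> line u" shows "u \<in> line y"
proof -
  obtain c where c: "c \<in> E" "y = c * u" using assms line_iff by blast
  hence "c \<noteq> 0" using assms by auto
  hence "u = inverse c * y" using c by (simp add: field_simps)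
  thus ?thesis using c E_inverse line_iff by blast
qed

lemma line_self: "u \<in> line u" using E_1 line_iff by force

lemma line_diff: "x \<in> line u \<Longrightarrow> y \<in> line u \<Longrightarrow> x - y \<in> line u"
  unfolding line_iff using E_diff by (metis left_diff_distrib)

definition cnt :: "'a set \<Rightarrow> 'a set \<Rightarrow> 'a \<Rightarrow> nat" where
  "cnt X Y u = card {y \<in> Y. u - y \<in> X}"

end

context fctx begin

lemma sol_on_card:
  assumes X: "invar X" "0 \<notin> X" and Y: "invar Y" "0 \<notin> Y" and u: "u \<noteq> 0"
  shows "card {y \<in> Y. u - y \<in> X \<and> y \<in> line u} = (if u \<in> X \<and> u \<in> Y then card E - 2 else 0)"
proof (cases "u \<in> X \<and> u \<in> Y")
  case True
  have "{y \<in> Y. u - y \<in> X \<and> y \<in> line u} = (\<lambda>c. c * u) ` (E - {0,1})"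
  proof
    show "{y \<in> Y. u - y \<in> X \<and> y \<in> line u} \<subseteq> (\<lambda>c. c * u) ` (E - {0,1})"
    proof
      fix y assume y: "y \<in> {y \<in> Y. u - y \<in> X \<and> y \<in> line u}"
      then obtain c where c: "c \<in> E" "y = c * u" using line_iff by blast
      have "c \<noteq> 0" using y c Y by auto
      moreover have "u - y = (1 - c) * u" using c by (simp add: algebra_simps)
      hence "c \<noteq> 1" using y X by auto
      ultimately show "y \<in> (\<lambda>c. c * u) ` (E - {0,1})" using c by auto
    qed
    show "(\<lambda>c. c * u) ` (E - {0,1}) \<subseteq> {y \<in> Y. u - y \<in> X \<and> y \<in> line u}"
    proof
      fix y assume "y \<in> (\<lambda>c. c * u) ` (E - {0,1})"
      then obtain c where c: "c \<in> E" "c \<noteq> 0" "c \<noteq> 1" "y = c * u" by auto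
      have "y \<in> Y" using c True Y unfolding invar_def by auto
      moreover have "u - y = (1 - c) * u" using c by (simp add: algebra_simps)
      moreover have "(1 - c) * u \<in> X" using c True X E_diff[OF E_1 c(1)] unfolding invar_def by auto
      moreover have "y \<in> line u" using c line_iff by blast
      ultimately show "y \<in> {y \<in> Y. u - y \<in> X \<and> y \<in> line u}" by simp
    qed
  qed
  moreover have "card (E - {0,1}) = card E - 2" using E_0 E_1 by (simp add: card_Diff_subset)
  ultimately show ?thesis using True card_scaled[OF u] by simp
next
  case False
  have empt: "{y \<in> Y. u - y \<in> X \<and> y \<in> line u} = {}"
  proof (rule ccontr)
    assume "{y \<in> Y. u - y \<in> X \<and> y \<in> line u} \<noteq> {}"
    then obtain y where y: "y \<in> Y" "u - y \<in> X" "y \<in> line u" by blast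
    then obtain c where c: "c \<in> E" "y = c * u" using line_iff by blast
    have c0: "c \<noteq> 0" using y c Y by auto
    have uy: "u - y = (1 - c) * u" using c by (simp add: algebra_simps)
    hence c1: "1 - c \<noteq> 0" using y X by auto
    have "u \<in> Y" using invar_mem_iff[OF Y(1) c(1) c0] y c by simp
    moreover have "u \<in> X" using invar_mem_iff[OF X(1) E_diff[OF E_1 c(1)] c1] y uy by simp
    ultimately show False using False by simp
  qed
  show ?thesis by (subst if_not_P[OF False]) (simp only: empt card.empty)
qed

definition Soff where "Soff X Y u = {y \<in> Y. u - y \<in> X \<and> y \<notin> line u}"
definition Pset where "Pset X Y u = Sigma (Y - line u) (\<lambda>y. (X - line u) - line y)"

lemma Pset_card:
  assumes X: "invar X" "0 \<notin> X" and Y: "invar Y" "0 \<notin> Y" and u: "u \<noteq> 0"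
  shows "card (Pset X Y u) + (card E - 1) * card ((X \<inter> Y) - line u)
         = card (Y - line u) * card (X - line u)"
proof -
  define B where "B = Y - line u"
  define A where "A = X - line u"
  have invA: "invar A" unfolding A_def using invar_diff[OF X(1) invar_line] .
  have A0: "0 \<notin> A" unfolding A_def using X by simp
  have c1: "card (Pset X Y u) = (\<Sum>y\<in>B. card (A - line y))"
    unfolding Pset_def A_def B_def by (simp add: card_SigmaI)
  have each: "card (A - line y) + (if y \<in> X then card E - 1 else 0) = card A" if y: "y \<in> B" for y
  proof -
    have "y \<noteq> 0" using y Y unfolding B_def by auto
    moreover have "y \<in> A \<longleftrightarrow> y \<in> X" using y unfolding A_def B_def by auto
    ultimately show ?thesis using card_diff_line[OF invA A0, of y] by simp
  qed
  have "(\<Sum>y\<in>B. card (A - line y)) + (\<Sum>y\<in>B. (if y \<in> X then card E - 1 else 0))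
        = (\<Sum>y\<in>B. card A)"
    using each by (simp add: sum.distrib[symmetric])
  moreover have "(\<Sum>y\<in>B. (if y \<in> X then card E - 1 else 0)) = (card E - 1) * card (B \<inter> X)"
    by (simp add: sum.If_cases Int_def)
  moreover have "B \<inter> X = (X \<inter> Y) - line u" unfolding B_def by auto
  ultimately show ?thesis using c1 unfolding A_def B_def by (simp add: mult.commute)
qed

lemma Soff_Pset:
  assumes X: "invar X" "0 \<notin> X" and Y: "invar Y" "0 \<notin> Y" and u: "u \<noteq> 0"
  shows "card (Pset X Y u) = (card Ez * card Ez) * card (Soff X Y u)"
proof -
  define \<Phi> where "\<Phi> = (\<lambda>((a::'a, b::'a), y::'a). (b * y, a * (u - y)))"
  define Dom where "Dom = (Ez \<times> Ez) \<times> Soff X Y u"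
  have inj: "inj_on \<Phi> Dom"
  proof (rule inj_onI)
    fix z z' assume z: "z \<in> Dom" "z' \<in> Dom" "\<Phi> z = \<Phi> z'"
    obtain a b y a' b' y' where zz: "z = ((a,b),y)" "z' = ((a',b'),y')" by (metis prod.collapse)
    have m: "a \<in> E" "a \<noteq> 0" "b \<in> E" "b \<noteq> 0" "a' \<in> E" "a' \<noteq> 0" "b' \<in> E" "b' \<noteq> 0"
      using z zz unfolding Dom_def Ez_def by auto
    have y: "y \<in> Y" "y \<notin> line u" "y' \<in> Y" using z zz unfolding Dom_def Soff_def by auto
    have y0: "y \<noteq> 0" using y Y by auto
    have e1: "b * y = b' * y'" and e2: "a * (u - y) = a' * (u - y')"
      using z(3) zz unfolding \<Phi>_def by auto
    have yy: "y' = (b / b') * y" using e1 m by (simp add: field_simps)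
    have "a = a'"
    proof (rule ccontr)
      assume ne: "a \<noteq> a'"
      have "(a - a') * u = (a - a' * (b / b')) * y" using e2 yy by (simp add: algebra_simps)
      hence "u = ((a - a' * (b / b')) / (a - a')) * y" using ne by (simp add: field_simps)
      moreover have "(a - a' * (b / b')) / (a - a') \<in> E" using m E_diff E_mult E_divide by simp
      ultimately have "u \<in> line y" using line_iff by blast
      hence "y \<in> line u" using line_sym[OF y0 u] by simp
      thus False using y by simp
    qed
    hence "y = y'" using e2 m by simp
    moreover hence "b = b'" using e1 y0 by simp
    ultimately show "z = z'" using zz \<open>a = a'\<close> by simp
  qed
  have img: "\<Phi> ` Dom = Pset X Y u"
  proof
    show "\<Phi> ` Dom \<subseteq> Pset X Y u"
    proof
      fix w assume "w \<in> \<Phi> ` Dom"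
      then obtain a b y where d: "((a,b),y) \<in> Dom" "w = (b * y, a * (u - y))" unfolding \<Phi>_def by auto
      have m: "a \<in> E" "a \<noteq> 0" "b \<in> E" "b \<noteq> 0" using d unfolding Dom_def Ez_def by auto
      have y: "y \<in> Y" "u - y \<in> X" "y \<notin> line u" using d unfolding Dom_def Soff_def by auto
      have y0: "y \<noteq> 0" using y Y by auto
      have "b * y \<in> Y" using y m Y unfolding invar_def by auto
      moreover have "b * y \<notin> line u" using y invar_mem_iff[OF invar_line m(3,4)] by simp
      moreover have "a * (u - y) \<in> X" using y m X unfolding invar_def by auto
      moreover have "a * (u - y) \<notin> line u"
      proof
        assume "a * (u - y) \<in> line u"
        hence "u - y \<in> line u" using invar_mem_iff[OF invar_line m(1,2)] by simp
        hence "u - (u - y) \<in> line u" using line_diff line_self by blast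
        thus False using y by simp
      qed
      moreover have "a * (u - y) \<notin> line (b * y)"
      proof
        assume "a * (u - y) \<in> line (b * y)"
        then obtain c where c: "c \<in> E" "a * (u - y) = c * (b * y)" using line_iff by blast
        hence "u = (c * b / a + 1) * y" using m by (simp add: field_simps)
        moreover have "c * b / a + 1 \<in> E" using c m E_mult E_divide E_add E_1 by simp
        ultimately have "u \<in> line y" using line_iff by blast
        hence "y \<in> line u" using line_sym[OF y0 u] by simp
        thus False using y by simp
      qed
      ultimately show "w \<in> Pset X Y u" using d unfolding Pset_def by auto
    qed
    show "Pset X Y u \<subseteq> \<Phi> ` Dom"
    proof
      fix w assume w: "w \<in> Pset X Y u"
      then obtain y0 x0 where wd: "w = (y0, x0)" "y0 \<in> Y" "y0 \<notin> line u" "x0 \<in> X" "x0 \<notin> line u"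
        "x0 \<notin> line y0" unfolding Pset_def by auto
      have nz: "y0 \<noteq> 0" "x0 \<noteq> 0" using wd X Y by auto
      have "\<forall>c\<in>E. x0 \<noteq> c * y0" using wd line_iff by blast
      then obtain l mu where lm: "l \<in> E" "mu \<in> E" "u = l * x0 + mu * y0"
        using two_dim[OF nz(2) nz(1)] by blast
      have l0: "l \<noteq> 0"
      proof
        assume "l = 0"
        hence "u = mu * y0" using lm by simp
        hence "u \<in> line y0" using lm line_iff by blast
        thus False using line_sym[OF nz(1) u] wd by blast
      qed
      have mu0: "mu \<noteq> 0"
      proof
        assume "mu = 0"
        hence "u = l * x0" using lm by simp
        hence "u \<in> line x0" using lm line_iff by blast
        thus False using line_sym[OF nz(2) u] wd by blast
      qed
      define y where "y = mu * y0"
      have "y \<in> Y" using wd lm mu0 Y unfolding y_def invar_def by auto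
      moreover have "u - y = l * x0" using lm unfolding y_def by simp
      moreover hence "u - y \<in> X" using wd lm l0 X unfolding invar_def by auto
      moreover have "y \<notin> line u" using wd invar_mem_iff[OF invar_line lm(2) mu0] unfolding y_def by simp
      ultimately have dom: "((inverse l, inverse mu), y) \<in> Dom"
        unfolding Dom_def Soff_def Ez_def using lm l0 mu0 E_inverse by auto
      have "\<Phi> ((inverse l, inverse mu), y) = (y0, x0)"
        unfolding \<Phi>_def using \<open>u - y = l * x0\<close> l0 mu0 y_def by simp
      thus "w \<in> \<Phi> ` Dom" using dom wd by force
    qed
  qed
  have "card (Pset X Y u) = card Dom" using img card_image[OF inj] by simp
  thus ?thesis unfolding Dom_def by (simp add: card_cartesian_product)
qed

lemma main_count:
  assumes X: "invar X" "0 \<notin> X" and Y: "invar Y" "0 \<notin> Y" and u: "u \<noteq> 0" and v: "v \<noteq> 0"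
    and mx: "u \<in> X \<longleftrightarrow> v \<in> X" and my: "u \<in> Y \<longleftrightarrow> v \<in> Y"
  shows "cnt X Y u = cnt X Y v"
proof -
  have split: "cnt X Y w = card {y \<in> Y. w - y \<in> X \<and> y \<in> line w} + card (Soff X Y w)" for w
  proof -
    have "{y \<in> Y. w - y \<in> X} = {y \<in> Y. w - y \<in> X \<and> y \<in> line w} \<union> Soff X Y w"
      unfolding Soff_def by auto
    moreover have "{y \<in> Y. w - y \<in> X \<and> y \<in> line w} \<inter> Soff X Y w = {}" unfolding Soff_def by auto
    ultimately show ?thesis unfolding cnt_def by (simp add: card_Un_disjoint)
  qed
  have on: "card {y \<in> Y. u - y \<in> X \<and> y \<in> line u} = card {y \<in> Y. v - y \<in> X \<and> y \<in> line v}"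
    using sol_on_card[OF X Y u] sol_on_card[OF X Y v] mx my by simp
  have XY: "invar (X \<inter> Y)" "0 \<notin> X \<inter> Y" using invar_Int[OF X(1) Y(1)] X by auto
  have ax: "card (X - line u) = card (X - line v)"
    using card_diff_line[OF X u] card_diff_line[OF X v] mx by simp
  have ay: "card (Y - line u) = card (Y - line v)"
    using card_diff_line[OF Y u] card_diff_line[OF Y v] my by simp
  have axy: "card (X \<inter> Y - line u) = card (X \<inter> Y - line v)"
    using card_diff_line[OF XY u] card_diff_line[OF XY v] mx my by simp
  have "card (Pset X Y u) = card (Pset X Y v)"
    using Pset_card[OF X Y u] Pset_card[OF X Y v] ax ay axy by simp
  hence "(card Ez * card Ez) * card (Soff X Y u) = (card Ez * card Ez) * card (Soff X Y v)"
    using Soff_Pset[OF X Y u] Soff_Pset[OF X Y v] by simp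
  moreover have "card Ez \<ge> 1" using card_Ez card_E_ge2 by simp
  hence "Ez \<noteq> {}" by auto
  ultimately have "card (Soff X Y u) = card (Soff X Y v)" by simp
  thus ?thesis using split on by simp
qed

end

context fctx begin

definition t where "t = (p ^ k - 1) div r ^ m"

lemma f_eq2: "f x = Tr (x ^ t)" using f_eq t_def by simp

lemma t_eq: "\<exists>j. t = (Q - 1) * j"
proof -
  obtain j where j: "Q + 1 = r^m * j" using N_dvd_Q1 by blast
  have h: "p ^ k - 1 = (Q - 1) * (Q + 1)" using Q_sq Q_pos by (cases Q) (auto simp: algebra_simps)
  have "p ^ k - 1 = (Q - 1) * (r^m * j)" using h j by (simp only:)
  hence "p ^ k - 1 = r^m * ((Q - 1) * j)" by (simp only: mult.left_commute)
  moreover have "r^m > 0" using r_ge5 by simp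
  ultimately have "t = (Q - 1) * j" unfolding t_def by simp
  thus ?thesis by blast
qed

lemma E_pow_t: "c \<in> E \<Longrightarrow> c \<noteq> 0 \<Longrightarrow> c ^ t = 1"
proof -
  assume c: "c \<in> E" "c \<noteq> 0"
  obtain Q' where QQ: "Q = Suc Q'" using Q_pos by (cases Q) auto
  have e1: "c ^ Q = c * c ^ (Q - 1)" unfolding QQ by simp
  have "c ^ Q = c" using c unfolding E_def by simp
  hence "c * c ^ (Q - 1) = c * 1" using e1 by simp
  hence "c ^ (Q - 1) = 1" using c by simp
  thus "c ^ t = 1" using t_eq by (metis power_mult power_one)
qed

lemma f_scale: "c \<in> E \<Longrightarrow> c \<noteq> 0 \<Longrightarrow> f (c * x) = f x"
  using E_pow_t f_eq2 by (simp add: power_mult_distrib)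

definition T :: "'a option \<Rightarrow> 'a set" where
  "T a = (case a of None \<Rightarrow> {0} | Some i \<Rightarrow> {z. z \<noteq> 0 \<and> f z = i})"

lemma rel_iff: "(u, w) \<in> scheme_rel f a \<longleftrightarrow> u - w \<in> T a"
  unfolding scheme_rel_def T_def by (cases a) auto

lemma T_Some_invar: "invar (T (Some i))" "0 \<notin> T (Some i)"
  unfolding T_def invar_def using f_scale by auto

lemma count_eq: "card {w. (u, w) \<in> scheme_rel f a \<and> (w, v) \<in> scheme_rel f b} = cnt (T a) (T b) (u - v)"
proof -
  have "{w. (u, w) \<in> scheme_rel f a \<and> (w, v) \<in> scheme_rel f b}
        = (\<lambda>y. y + v) ` {y \<in> T b. (u - v) - y \<in> T a}"
  proof
    show "{w. (u, w) \<in> scheme_rel f a \<and> (w, v) \<in> scheme_rel f b} \<subseteq> (\<lambda>y. y + v) ` {y \<in> T b. (u - v) - y \<in> T a}"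
    proof
      fix w assume "w \<in> {w. (u, w) \<in> scheme_rel f a \<and> (w, v) \<in> scheme_rel f b}"
      hence "u - w \<in> T a" "w - v \<in> T b" using rel_iff by auto
      moreover have "(u - v) - (w - v) = u - w" by simp
      ultimately show "w \<in> (\<lambda>y. y + v) ` {y \<in> T b. (u - v) - y \<in> T a}"
        by (intro image_eqI[of _ _ "w - v"]) auto
    qed
    show "(\<lambda>y. y + v) ` {y \<in> T b. (u - v) - y \<in> T a} \<subseteq> {w. (u, w) \<in> scheme_rel f a \<and> (w, v) \<in> scheme_rel f b}"
      using rel_iff by (auto simp: algebra_simps)
  qed
  moreover have "card ((\<lambda>y. y + v) ` {y \<in> T b. (u - v) - y \<in> T a}) = card {y \<in> T b. (u - v) - y \<in> T a}"
    by (intro card_image inj_onI) simp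
  ultimately show ?thesis unfolding cnt_def by simp
qed

lemma cnt_None_left: "cnt {0} Y d = (if d \<in> Y then 1 else 0)"
proof -
  have "{y \<in> Y. d - y \<in> {0}} = (if d \<in> Y then {d} else {})" by auto
  thus ?thesis unfolding cnt_def by simp
qed

lemma cnt_None_right: "cnt X {0} d = (if d \<in> X then 1 else 0)"
proof -
  have "{y \<in> {0}. d - y \<in> X} = (if d \<in> X then {0} else {})" by auto
  thus ?thesis unfolding cnt_def by simp
qed

lemma T_same:
  assumes "d \<in> T c" "d' \<in> T c"
  shows "d \<in> T x \<longleftrightarrow> d' \<in> T x"
  using assms unfolding T_def by (cases c; cases x) auto

lemma cnt_const:
  assumes "d \<in> T c" "d' \<in> T c"
  shows "cnt (T a) (T b) d = cnt (T a) (T b) d'"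
proof (cases c)
  case None thus ?thesis using assms unfolding T_def by simp
next
  case (Some i)
  have nz: "d \<noteq> 0" "d' \<noteq> 0" using assms Some unfolding T_def by auto
  show ?thesis
  proof (cases a)
    case None
    thus ?thesis using cnt_None_left T_same[OF assms] by (simp add: T_def[of None])
  next
    case (Some ia)
    show ?thesis
    proof (cases b)
      case None
      thus ?thesis using cnt_None_right T_same[OF assms] by (simp add: T_def[of None])
    next
      case (Some ib)
      show ?thesis using main_count[OF T_Some_invar[of ia] T_Some_invar[of ib] nz]
          T_same[OF assms] \<open>a = Some ia\<close> Some by simp
    qed
  qed
qed

lemma scheme_holds: "induces_assoc_scheme f d \<longleftrightarrow> d = card (f ` (UNIV - {0}))"
proof -
  have symm: "\<forall>a\<in>scheme_idx f. sym (scheme_rel f a)"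
  proof (intro ballI symI)
    fix a x y assume "(x, y) \<in> scheme_rel f a"
    hence xy: "x - y \<in> T a" using rel_iff by simp
    have "f (y - x) = f (x - y)" using f_scale[of "-1" "x-y"] E_uminus[OF E_1] by simp
    hence "y - x \<in> T a" using xy unfolding T_def by (cases a) auto
    thus "(y, x) \<in> scheme_rel f a" using rel_iff by simp
  qed
  have const: "\<forall>a\<in>scheme_idx f. \<forall>b\<in>scheme_idx f. \<forall>c\<in>scheme_idx f. \<exists>n::nat.
        \<forall>u v. (u, v) \<in> scheme_rel f c \<longrightarrow>
          card {w. (u, w) \<in> scheme_rel f a \<and> (w, v) \<in> scheme_rel f b} = n"
  proof (intro ballI)
    fix a b c
    show "\<exists>n::nat. \<forall>u v. (u, v) \<in> scheme_rel f c \<longrightarrow>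
          card {w. (u, w) \<in> scheme_rel f a \<and> (w, v) \<in> scheme_rel f b} = n"
    proof (cases "T c = {}")
      case True thus ?thesis using rel_iff by auto
    next
      case False
      then obtain d0 where d0: "d0 \<in> T c" by blast
      show ?thesis
      proof (rule exI[of _ "cnt (T a) (T b) d0"], intro allI impI)
        fix u v assume "(u, v) \<in> scheme_rel f c"
        hence "u - v \<in> T c" using rel_iff by simp
        hence "cnt (T a) (T b) (u - v) = cnt (T a) (T b) d0" using cnt_const[OF _ d0] by blast
        thus "card {w. (u, w) \<in> scheme_rel f a \<and> (w, v) \<in> scheme_rel f b} = cnt (T a) (T b) d0"
          using count_eq by simp
      qed
    qed
  qed
  show ?thesis unfolding induces_assoc_scheme_def using symm const by blast
qed

end

context fctx begin

definition chi :: "nat \<Rightarrow> int" where "chi a = Legendre (int a) (int r)"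
definition U :: "nat set" where "U = {1..<r}"
definition QR where "QR = {a \<in> U. chi a = 1}"
definition NQR where "NQR = {a \<in> U. chi a = -1}"

lemma r_gt2: "r > 2" using r_ge5 by simp

lemma chi_euler: "[chi a = int a ^ e] (mod int r)"
  unfolding chi_def e_def using euler_criterion[OF r_prime r_gt2, of "int a"] by simp

lemma chi_vals: "chi a = -1 \<or> chi a = 0 \<or> chi a = 1"
  unfolding chi_def Legendre_def by auto

lemma chi_zero_iff: "chi a = 0 \<longleftrightarrow> r dvd a"
  unfolding chi_def Legendre_def by (auto simp: cong_0_iff)

lemma vals_cong_eq:
  assumes "[x = y] (mod int r)" "x = -1 \<or> x = 0 \<or> x = 1" "y = -1 \<or> y = 0 \<or> y = 1"
  shows "x = y"
proof (rule ccontr)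
  assume "x \<noteq> y"
  hence "x - y \<noteq> 0" by simp
  moreover have "int r dvd x - y" using assms(1) by (simp add: cong_iff_dvd_diff)
  ultimately have "\<bar>int r\<bar> \<le> \<bar>x - y\<bar>" using dvd_imp_le_int by blast
  moreover have "\<bar>x - y\<bar> \<le> 2" using assms(2,3) by auto
  ultimately show False using r_ge5 by simp
qed

lemma chi_eqI: "[chi a = chi b] (mod int r) \<Longrightarrow> chi a = chi b"
  using vals_cong_eq chi_vals by blast

lemma chi_mult: "chi (a * b) = chi a * chi b"
proof -
  have A: "[chi (a * b) = int (a*b) ^ e] (mod int r)" by (rule chi_euler)
  have B: "[chi a * chi b = int a ^ e * int b ^ e] (mod int r)"
    using chi_euler cong_mult by blast
  have X: "int (a*b) ^ e = int a ^ e * int b ^ e" by (simp add: power_mult_distrib)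
  have "[chi (a * b) = chi a * chi b] (mod int r)"
    using cong_trans[OF A[unfolded X] cong_sym[OF B]] .
  moreover have "chi a * chi b = -1 \<or> chi a * chi b = 0 \<or> chi a * chi b = 1"
    using chi_vals[of a] chi_vals[of b] by auto
  ultimately show ?thesis using vals_cong_eq chi_vals[of "a*b"] by blast
qed

lemma chi_mod: "chi (a mod r) = chi a"
proof -
  have "[int (a mod r) = int a] (mod int r)" by (simp add: cong_def zmod_int)
  hence "[int (a mod r) ^ e = int a ^ e] (mod int r)" by (rule cong_pow)
  hence "[chi (a mod r) = chi a] (mod int r)"
    using chi_euler[of "a mod r"] chi_euler[of a] by (meson cong_sym cong_trans)
  thus ?thesis by (rule chi_eqI)
qed

lemma chi_one: "chi 1 = 1"
proof -
  have "[chi 1 = 1] (mod int r)" using chi_euler[of 1] by simp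
  thus ?thesis using vals_cong_eq chi_vals by blast
qed

lemma chi_pow: "chi (a ^ n) = chi a ^ n"
proof (induction n)
  case 0 thus ?case using chi_one by simp
next
  case (Suc n) thus ?case by (simp add: chi_mult)
qed

lemma chi_rm1: "chi (r - 1) = 1"
proof -
  have "[int (r - 1) = -1] (mod int r)" using r_ge5 by (simp add: cong_iff_dvd_diff of_nat_diff)
  hence "[int (r - 1) ^ e = (-1) ^ e] (mod int r)" by (rule cong_pow)
  hence "[int (r - 1) ^ e = 1] (mod int r)" using e_even by simp
  hence "[chi (r - 1) = 1] (mod int r)" using chi_euler by (meson cong_trans)
  thus ?thesis using vals_cong_eq chi_vals by blast
qed

lemma chi_p: "chi p = 1"
proof -
  have "[int p ^ e = 1] (mod int r)" using p_e_cong by (metis cong_int_iff of_nat_1 of_nat_power)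
  hence "[chi p = 1] (mod int r)" using chi_euler by (meson cong_trans)
  thus ?thesis using vals_cong_eq chi_vals by blast
qed

lemma nonres_exists: "\<exists>b. b \<in> U \<and> chi b = -1"
proof -
  obtain g where g: "residue_primroot r g" using prime_primitive_root_exists[of r] r_prime r_ge5 by auto
  have cop: "coprime r g" and og: "ord r g = r - 1"
    using g r_prime by (auto simp: residue_primroot_def totient_prime)
  have nd: "\<not> r dvd g" using cop r_prime
    by (metis coprime_absorb_left not_prime_unit)
  have "chi g \<noteq> 1"
  proof
    assume "chi g = 1"
    hence "[int g ^ e = 1] (mod int r)" using chi_euler[of g] by (metis cong_sym)
    hence "[g ^ e = 1] (mod r)" by (metis cong_int_iff of_nat_1 of_nat_power)
    hence "r - 1 dvd e" using og ord_divides by metis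
    hence "r - 1 \<le> e" using e_ge2 by (simp add: dvd_imp_le)
    thus False using r_e e_ge2 by simp
  qed
  moreover have "chi g \<noteq> 0" using nd chi_zero_iff by simp
  ultimately have "chi (g mod r) = -1" using chi_vals chi_mod by metis
  moreover have "g mod r \<in> U" unfolding U_def using nd r_ge5
    by (simp add: mod_greater_zero_iff_not_dvd Suc_leI)
  ultimately show ?thesis by blast
qed

lemma U_split: "U = QR \<union> NQR" "QR \<inter> NQR = {}"
proof -
  have "chi a \<noteq> 0" if "a \<in> U" for a
    using that chi_zero_iff r_ge5 unfolding U_def by (auto dest: dvd_imp_le)
  thus "U = QR \<union> NQR" unfolding QR_def NQR_def using chi_vals by auto
  show "QR \<inter> NQR = {}" unfolding QR_def NQR_def by auto
qed

lemma card_U: "card U = r - 1" unfolding U_def by simp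

lemma U_mod: "a \<in> U \<Longrightarrow> y \<in> U \<Longrightarrow> a * y mod r \<in> U"
proof -
  assume a: "a \<in> U" and y: "y \<in> U"
  have "\<not> r dvd a" "\<not> r dvd y" using a y unfolding U_def by (auto dest: dvd_imp_le)
  hence "\<not> r dvd a * y" using r_prime prime_dvd_mult_iff by blast
  thus ?thesis unfolding U_def using r_ge5 by (simp add: mod_greater_zero_iff_not_dvd Suc_leI)
qed

lemma mulmod_inj: "a \<in> U \<Longrightarrow> inj_on (\<lambda>y. a * y mod r) U"
proof (rule inj_onI)
  fix y y' assume a: "a \<in> U" and y: "y \<in> U" "y' \<in> U" and eq: "a * y mod r = a * y' mod r"
  have "\<not> r dvd a" using a unfolding U_def by (auto dest: dvd_imp_le)
  hence "coprime r a" using prime_imp_coprime[OF r_prime] by blast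
  hence "coprime a r" by (simp add: coprime_commute)
  hence "[y = y'] (mod r)" using eq cong_mult_lcancel_nat unfolding cong_def by blast
  thus "y = y'" using y unfolding U_def by (simp add: cong_less_modulus_unique_nat)
qed

lemma mulmod_bij: "a \<in> U \<Longrightarrow> bij_betw (\<lambda>y. a * y mod r) U U"
proof -
  assume a: "a \<in> U"
  have sub: "(\<lambda>y. a * y mod r) ` U \<subseteq> U" using U_mod a by auto
  have "card ((\<lambda>y. a * y mod r) ` U) = card U" using card_image[OF mulmod_inj[OF a]] .
  hence "(\<lambda>y. a * y mod r) ` U = U" using sub by (simp add: card_subset_eq U_def)
  thus ?thesis using mulmod_inj[OF a] by (simp add: bij_betw_def)
qed

lemma chi_mulmod: "chi (a * y mod r) = chi a * chi y" using chi_mod chi_mult by simp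

lemma card_QR: "card QR = e" and card_NQR: "card NQR = e"
proof -
  obtain b where b: "b \<in> U" "chi b = -1" using nonres_exists by blast
  have i1: "(\<lambda>y. b * y mod r) ` QR \<subseteq> NQR" using U_mod b chi_mulmod unfolding QR_def NQR_def by auto
  have i2: "(\<lambda>y. b * y mod r) ` NQR \<subseteq> QR" using U_mod b chi_mulmod unfolding QR_def NQR_def by auto
  have inj: "inj_on (\<lambda>y. b * y mod r) U" using mulmod_inj[OF b(1)] .
  have fin: "finite QR" "finite NQR" unfolding QR_def NQR_def U_def by auto
  have s1: "QR \<subseteq> U" "NQR \<subseteq> U" unfolding QR_def NQR_def by auto
  have "card QR = card ((\<lambda>y. b * y mod r) ` QR)"
    using card_image[OF inj_on_subset[OF inj s1(1)]] by simp
  also have "\<dots> \<le> card NQR" using card_mono[OF fin(2) i1] .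
  finally have "card QR \<le> card NQR" .
  moreover have "card NQR = card ((\<lambda>y. b * y mod r) ` NQR)"
    using card_image[OF inj_on_subset[OF inj s1(2)]] by simp
  moreover have "\<dots> \<le> card QR" using card_mono[OF fin(1) i2] .
  moreover have "card QR + card NQR = r - 1"
    using U_split(1) card_Un_disjoint[OF fin U_split(2)] card_U by simp
  ultimately show "card QR = e" "card NQR = e" using r_e by simp_all
qed

definition H where "H = (\<lambda>i. p ^ i mod r) ` {..<e}"

lemma H_QR: "H = QR"
proof -
  have sub: "H \<subseteq> QR"
  proof
    fix a assume "a \<in> H"
    then obtain i where a: "a = p ^ i mod r" unfolding H_def by auto
    have "\<not> r dvd p ^ i" using p_not_r r_prime prime_dvd_power by blast
    hence "a \<in> U" unfolding a U_def using r_ge5 by (simp add: mod_greater_zero_iff_not_dvd Suc_leI)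
    moreover have "chi a = 1" unfolding a chi_mod chi_pow chi_p by simp
    ultimately show "a \<in> QR" unfolding QR_def by simp
  qed
  have inj: "inj_on (\<lambda>i. p ^ i mod r) {..<e}"
  proof (rule inj_onI)
    fix i j assume ij: "i \<in> {..<e}" "j \<in> {..<e}" "p ^ i mod r = p ^ j mod r"
    have "coprime r p" using prime_imp_coprime[OF r_prime p_not_r] .
    hence cop: "coprime (p ^ (min i j)) r" by (simp add: coprime_commute)
    show "i = j"
    proof (rule ccontr)
      assume "i \<noteq> j"
      define lo where "lo = min i j"
      define d where "d = max i j - min i j"
      have d: "d > 0" "d < e" using ij \<open>i \<noteq> j\<close> unfolding d_def by auto
      have "[p ^ lo * p ^ d = p ^ lo * 1] (mod r)"
        using ij unfolding cong_def lo_def d_def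
        by (cases "i \<le> j") (simp_all add: power_add[symmetric] max_def min_def)
      hence "[p ^ d = 1] (mod r)" using cong_mult_lcancel_nat cop lo_def by blast
      hence "e dvd d" using p_pow_cong_r_iff by blast
      thus False using dvd_imp_le[of e d] d by simp
    qed
  qed
  have "card H = e" unfolding H_def using card_image[OF inj] by simp
  moreover have "finite QR" unfolding QR_def U_def by auto
  ultimately show ?thesis using sub card_QR card_subset_eq by metis
qed

lemma sum_chi: "(\<Sum>a\<in>U. chi a) = 0"
proof -
  have fin: "finite QR" "finite NQR" unfolding QR_def NQR_def U_def by auto
  have "(\<Sum>a\<in>U. chi a) = (\<Sum>a\<in>QR. chi a) + (\<Sum>a\<in>NQR. chi a)"
    using U_split sum.union_disjoint[OF fin U_split(2), of chi] by simp
  moreover have "(\<Sum>a\<in>QR. chi a) = (\<Sum>a\<in>QR. 1)" by (rule sum.cong) (auto simp: QR_def)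
  moreover have "(\<Sum>a\<in>NQR. chi a) = (\<Sum>a\<in>NQR. -1)" by (rule sum.cong) (auto simp: NQR_def)
  ultimately have "(\<Sum>a\<in>U. chi a) = int (card QR) - int (card NQR)" by simp
  thus ?thesis using card_QR card_NQR by simp
qed

end

context fctx begin

lemma z_pow_mod:
  assumes "(z::'a) ^ r = 1" shows "z ^ n = z ^ (n mod r)"
proof -
  have "z ^ n = z ^ (r * (n div r) + n mod r)" by (simp only: mult_div_mod_eq)
  also have "\<dots> = z ^ (n mod r)" by (simp only: power_add power_mult assms power_one mult.left_neutral)
  finally show ?thesis .
qed

lemma z_pow_eq1:
  assumes "(z::'a) ^ r = 1" "z \<noteq> 1" shows "z ^ n = 1 \<longleftrightarrow> r dvd n"
proof
  assume "z ^ n = 1"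
  thus "r dvd n" using pow_eq_1_primepow[OF r_prime, of z 1 n] assms by simp
next
  assume "r dvd n"
  then obtain c where "n = r * c" by blast
  thus "z ^ n = 1" using assms by (simp add: power_mult)
qed

lemma U_insert: "{..<r} = insert 0 U" "0 \<notin> U"
  unfolding U_def using r_ge5 by auto

lemma sum_U_pow:
  assumes "(z::'a) ^ r = 1" "z \<noteq> 1"
  shows "(\<Sum>a\<in>U. z ^ (a * c)) = (if r dvd c then of_nat r - 1 else -1)"
proof -
  have "(\<Sum>a<r. (z ^ c) ^ a) = 1 + (\<Sum>a\<in>U. z ^ (a * c))"
    unfolding U_insert(1) using U_insert(2) by (simp add: U_def power_mult[symmetric] mult.commute)
  moreover have "(\<Sum>a<r. (z ^ c) ^ a) = (if r dvd c then of_nat r else 0)"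
  proof (cases "r dvd c")
    case True
    hence "z ^ c = 1" using z_pow_eq1[OF assms] by simp
    thus ?thesis using True by simp
  next
    case False
    hence "z ^ c \<noteq> 1" using z_pow_eq1[OF assms] by simp
    moreover have "(z ^ c) ^ r = (z ^ r) ^ c" by (simp add: power_mult[symmetric] mult.commute)
    hence "(z ^ c) ^ r = 1" using assms by simp
    ultimately show ?thesis using geom_root_sum False by simp
  qed
  ultimately have "(\<Sum>a\<in>U. z ^ (a * c)) = (if r dvd c then of_nat r else 0) - 1"
    by (simp add: algebra_simps)
  thus ?thesis by simp
qed

definition gauss :: "'a \<Rightarrow> 'a" where "gauss z = (\<Sum>a\<in>U. of_int (chi a) * z ^ a)"

lemma chi_sq_U: "a \<in> U \<Longrightarrow> chi a * chi a = 1"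
proof -
  assume "a \<in> U"
  hence "chi a \<noteq> 0" using chi_zero_iff unfolding U_def by (auto dest: dvd_imp_le)
  thus ?thesis using chi_vals[of a] by auto
qed

lemma gauss_sq:
  assumes z: "(z::'a) ^ r = 1" "z \<noteq> 1"
  shows "gauss z * gauss z = of_nat r"
proof -
  have inner: "(\<Sum>c\<in>U. of_int (chi a * chi c) * z ^ (a + c)) = (\<Sum>y\<in>U. of_int (chi y) * z ^ (a * (1 + y)))"
    if a: "a \<in> U" for a
  proof -
    have "(\<Sum>c\<in>U. of_int (chi a * chi c) * z ^ (a + c))
        = (\<Sum>y\<in>U. of_int (chi a * chi (a * y mod r)) * z ^ (a + a * y mod r))"
      using sum.reindex_bij_betw[OF mulmod_bij[OF a], of "\<lambda>c. of_int (chi a * chi c) * z ^ (a + c)"]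
      by simp
    also have "\<dots> = (\<Sum>y\<in>U. of_int (chi y) * z ^ (a * (1 + y)))"
    proof (rule sum.cong)
      fix y assume "y \<in> U"
      have "chi a * chi (a * y mod r) = chi y" using chi_mulmod chi_sq_U[OF a]
        by (metis mult.assoc mult_1)
      moreover have "z ^ (a + a * y mod r) = z ^ (a * (1 + y))"
      proof -
        have "z ^ (a + a * y mod r) = z ^ ((a + a * y mod r) mod r)" using z_pow_mod[OF z(1)] by blast
        also have "(a + a * y mod r) mod r = (a * (1 + y)) mod r" by (simp add: mod_add_right_eq algebra_simps)
        also have "z ^ \<dots> = z ^ (a * (1 + y))" using z_pow_mod[OF z(1)] by metis
        finally show ?thesis .
      qed
      ultimately show "of_int (chi a * chi (a * y mod r)) * z ^ (a + a * y mod r) = of_int (chi y) * z ^ (a * (1 + y))"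
        by simp
    qed simp
    finally show ?thesis .
  qed
  have "gauss z * gauss z = (\<Sum>a\<in>U. \<Sum>c\<in>U. of_int (chi a * chi c) * z ^ (a + c))"
    unfolding gauss_def by (simp add: sum_product power_add mult_ac)
  also have "\<dots> = (\<Sum>a\<in>U. \<Sum>y\<in>U. of_int (chi y) * z ^ (a * (1 + y)))"
    using inner by (rule sum.cong[OF refl])
  also have "\<dots> = (\<Sum>y\<in>U. of_int (chi y) * (\<Sum>a\<in>U. z ^ (a * (1 + y))))"
    by (subst sum.swap) (simp add: sum_distrib_left)
  also have "\<dots> = (\<Sum>y\<in>U. of_int (chi y) * (- 1 + (if y = r - 1 then of_nat r else 0)))"
  proof (rule sum.cong[OF refl])
    fix y assume y: "y \<in> U"
    have "r dvd 1 + y \<longleftrightarrow> y = r - 1"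
    proof
      assume "r dvd 1 + y"
      moreover have "0 < 1 + y" "1 + y \<le> r" using y unfolding U_def by auto
      ultimately have "1 + y = r" using dvd_imp_le by (metis antisym dvd_imp_le)
      thus "y = r - 1" by simp
    qed (use r_ge5 in simp)
    thus "of_int (chi y) * (\<Sum>a\<in>U. z ^ (a * (1 + y))) = of_int (chi y) * (- 1 + (if y = r - 1 then of_nat r else 0))"
      using sum_U_pow[OF z, of "1 + y"] by simp
  qed
  also have "\<dots> = (\<Sum>y\<in>U. - of_int (chi y)) + (\<Sum>y\<in>U. of_int (chi y) * (if y = r - 1 then of_nat r else 0))"
    by (simp add: sum.distrib[symmetric] algebra_simps)
  also have "(\<Sum>y\<in>U. of_int (chi y) * (if y = r - 1 then of_nat r else 0))
      = (\<Sum>y\<in>U. if y = r - 1 then of_int (chi y) * of_nat r else (0::'a))"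
    by (rule sum.cong) auto
  also have "\<dots> = of_int (chi (r - 1)) * of_nat r"
  proof -
    have "r - 1 \<in> U" unfolding U_def using r_ge5 by simp
    moreover have "finite U" unfolding U_def by simp
    ultimately show ?thesis by (simp add: sum.delta)
  qed
  also have "(\<Sum>y\<in>U. - of_int (chi y)) = - (of_int (\<Sum>y\<in>U. chi y) :: 'a)"
    by (simp add: sum_negf)
  also have "- (of_int (\<Sum>y\<in>U. chi y) :: 'a) + of_int (chi (r - 1)) * of_nat r = of_nat r"
    using sum_chi chi_rm1 by simp
  finally show ?thesis .
qed

definition S :: "'a \<Rightarrow> 'a" where "S z = (\<Sum>i<e. z ^ (p ^ i))"

lemma H_inj: "inj_on (\<lambda>i. p ^ i mod r) {..<e}"
proof -
  have "card H = e" using H_QR card_QR by simp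
  thus ?thesis unfolding H_def by (intro eq_card_imp_inj_on) auto
qed

lemma S_QR:
  assumes z: "(z::'a) ^ r = 1" shows "S z = (\<Sum>a\<in>QR. z ^ a)"
proof -
  have "S z = (\<Sum>i<e. z ^ (p ^ i mod r))" unfolding S_def using z_pow_mod[OF z] by simp
  also have "\<dots> = (\<Sum>a\<in>H. z ^ a)" unfolding H_def using sum.reindex[OF H_inj, of "\<lambda>a. z ^ a"] by simp
  finally show ?thesis using H_QR by simp
qed

lemma nonres: obtains b where "b \<in> U" "chi b = -1" using nonres_exists by blast

lemma mulmod_QR_NQR:
  assumes b: "b \<in> U" "chi b = -1"
  shows "bij_betw (\<lambda>y. b * y mod r) QR NQR"
proof -
  have inj: "inj_on (\<lambda>y. b * y mod r) QR"
    using mulmod_inj[OF b(1)] by (rule inj_on_subset) (auto simp: QR_def)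
  have sub: "(\<lambda>y. b * y mod r) ` QR \<subseteq> NQR" using U_mod b chi_mulmod unfolding QR_def NQR_def by auto
  have "card ((\<lambda>y. b * y mod r) ` QR) = card NQR" using card_image[OF inj] card_QR card_NQR by simp
  moreover have "finite NQR" unfolding NQR_def U_def by auto
  ultimately have "(\<lambda>y. b * y mod r) ` QR = NQR" using sub card_subset_eq by metis
  thus ?thesis using inj by (simp add: bij_betw_def)
qed

lemma S_NQR:
  assumes z: "(z::'a) ^ r = 1" and b: "b \<in> U" "chi b = -1"
  shows "S (z ^ b) = (\<Sum>a\<in>NQR. z ^ a)"
proof -
  have zb: "(z ^ b) ^ r = 1" using z by (metis power_mult mult.commute power_one)
  have "S (z ^ b) = (\<Sum>a\<in>QR. z ^ (b * a mod r))"
    using S_QR[OF zb] z_pow_mod[OF z] by (simp add: power_mult[symmetric])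
  also have "\<dots> = (\<Sum>a\<in>NQR. z ^ a)"
    using sum.reindex_bij_betw[OF mulmod_QR_NQR[OF b], of "\<lambda>a. z ^ a"] by simp
  finally show ?thesis .
qed

lemma S_pair:
  assumes z: "(z::'a) ^ r = 1" "z \<noteq> 1" and b: "b \<in> U" "chi b = -1"
  shows "S z + S (z ^ b) = -1" and "S z - S (z ^ b) = gauss z"
proof -
  have fin: "finite QR" "finite NQR" unfolding QR_def NQR_def U_def by auto
  have "(\<Sum>a\<in>U. z ^ a) = -1" using sum_U_pow[OF z, of 1] r_ge5 by simp
  moreover have "(\<Sum>a\<in>U. z ^ a) = (\<Sum>a\<in>QR. z ^ a) + (\<Sum>a\<in>NQR. z ^ a)"
    using U_split(1) sum.union_disjoint[OF fin U_split(2)] by simp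
  ultimately show "S z + S (z ^ b) = -1" using S_QR[OF z(1)] S_NQR[OF z(1) b] by simp
  have "gauss z = (\<Sum>a\<in>QR. of_int (chi a) * z ^ a) + (\<Sum>a\<in>NQR. of_int (chi a) * z ^ a)"
    unfolding gauss_def using U_split(1) sum.union_disjoint[OF fin U_split(2)] by simp
  also have "\<dots> = (\<Sum>a\<in>QR. z ^ a) - (\<Sum>a\<in>NQR. z ^ a)"
    by (simp add: QR_def NQR_def sum_negf)
  finally show "S z - S (z ^ b) = gauss z" using S_QR[OF z(1)] S_NQR[OF z(1) b] by simp
qed

lemma S_quadratic:
  assumes z: "(z::'a) ^ r = 1" "z \<noteq> 1"
  shows "(2 * S z + 1) * (2 * S z + 1) = of_nat r"
proof -
  obtain b where b: "b \<in> U" "chi b = -1" using nonres by blast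
  have "2 * S z + 1 = gauss z" using S_pair[OF z b] by (simp add: algebra_simps)
  thus ?thesis using gauss_sq[OF z] by simp
qed

end

lemma sum_periodic:
  fixes g :: "nat \<Rightarrow> 'b::semiring_1"
  shows "(\<Sum>j<c*e. g (j mod e)) = of_nat c * (\<Sum>j<e. g j)"
proof (induction c)
  case 0 thus ?case by simp
next
  case (Suc c)
  have un: "{..<Suc c * e} = {..<c*e} \<union> {0 + c*e..<e + c*e}" by auto
  have "(\<Sum>j<Suc c*e. g (j mod e)) = (\<Sum>j<c*e. g (j mod e)) + (\<Sum>j\<in>{0 + c*e..<e + c*e}. g (j mod e))"
    unfolding un by (rule sum.union_disjoint) auto
  also have "(\<Sum>j\<in>{0 + c*e..<e + c*e}. g (j mod e)) = (\<Sum>j\<in>{0..<e}. g ((j + c*e) mod e))"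
    by (rule sum.shift_bounds_nat_ivl)
  also have "\<dots> = (\<Sum>j<e. g j)" by (rule sum.cong) auto
  finally show ?case using Suc by (simp add: algebra_simps)
qed

context fctx begin

lemma p_pow_mod_e: "p ^ j mod r = p ^ (j mod e) mod r"
proof -
  have "p ^ j = (p ^ e) ^ (j div e) * p ^ (j mod e)"
    by (metis power_add power_mult div_mult_mod_eq mult.commute)
  moreover have "[(p ^ e) ^ (j div e) * p ^ (j mod e) = 1 ^ (j div e) * p ^ (j mod e)] (mod r)"
    by (intro cong_mult cong_pow p_e_cong cong_refl)
  ultimately show ?thesis unfolding cong_def by simp
qed

lemma Tr_level1:
  assumes z: "(z::'a) ^ r = 1"
  shows "Tr z = of_nat (r ^ (m - 1)) * S z"
proof -
  have "Tr z = (\<Sum>j<r^(m-1) * e. z ^ (p ^ j))" unfolding Tr_def2 k_eq ..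
  also have "\<dots> = (\<Sum>j<r^(m-1) * e. (\<lambda>i. z ^ (p ^ i)) (j mod e))"
  proof (rule sum.cong[OF refl])
    fix j
    have "z ^ (p ^ j) = z ^ (p ^ j mod r)" using z_pow_mod[OF z] .
    also have "\<dots> = z ^ (p ^ (j mod e) mod r)" using p_pow_mod_e by simp
    also have "\<dots> = z ^ (p ^ (j mod e))" using z_pow_mod[OF z] by simp
    finally show "z ^ (p ^ j) = (\<lambda>i. z ^ (p ^ i)) (j mod e)" by simp
  qed
  also have "\<dots> = of_nat (r^(m-1)) * S z" unfolding S_def by (rule sum_periodic)
  finally show ?thesis .
qed

lemma p_pow_ge1: "p ^ d \<ge> 1" using p_ge2 by simp

lemma Tr_high:
  assumes zN: "(z::'a) ^ (r ^ m) = 1" and zr: "z ^ r \<noteq> 1"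
  shows "Tr z = 0"
proof -
  define j0 where "j0 = (LEAST j. z ^ (r ^ j) = 1)"
  have j0m: "j0 \<le> m" unfolding j0_def using zN by (rule Least_le)
  have zj0: "z ^ (r ^ j0) = 1" unfolding j0_def using zN by (rule LeastI)
  have j0_2: "j0 \<ge> 2"
  proof (rule ccontr)
    assume "\<not> j0 \<ge> 2"
    hence "j0 = 0 \<or> j0 = 1" by auto
    thus False
    proof
      assume "j0 = 0" hence "z = 1" using zj0 by simp
      thus False using zr by simp
    next
      assume "j0 = 1" thus False using zj0 zr by simp
    qed
  qed
  have zj1: "z ^ (r ^ (j0 - 1)) \<noteq> 1"
  proof
    assume "z ^ (r ^ (j0 - 1)) = 1"
    hence "j0 \<le> j0 - 1" unfolding j0_def by (rule Least_le)
    thus False using j0_2 by simp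
  qed
  obtain d where d1: "[p ^ d = 1] (mod r^(j0-1))" and d2: "\<not> [p ^ d = 1] (mod r^j0)"
    using level_exists[OF j0_2 j0m] by blast
  have dv: "r^(j0-1) dvd p ^ d - 1" using d1 p_pow_ge1 cong_altdef_nat by blast
  define w where "w = z ^ (p ^ d - 1)"
  have wr: "w ^ r = 1"
  proof -
    obtain c where c: "p ^ d - 1 = r^(j0-1) * c" using dv by blast
    have jj: "Suc (j0 - 1) = j0" using j0_2 by simp
    have e: "r ^ j0 = r ^ (j0 - 1) * r" by (metis jj power_Suc2)
    have "(p ^ d - 1) * r = r ^ j0 * c" unfolding c e by (simp add: mult_ac)
    thus ?thesis unfolding w_def by (simp add: power_mult[symmetric] zj0 power_mult)
  qed
  have w1: "w \<noteq> 1"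
  proof
    assume "w = 1"
    hence "r ^ j0 dvd p ^ d - 1"
      using pow_eq_1_primepow[OF r_prime zj0 zj1] j0_2 unfolding w_def by simp
    hence "[p ^ d = 1] (mod r ^ j0)" using p_pow_ge1 cong_altdef_nat by blast
    thus False using d2 by simp
  qed
  have zpd: "z ^ (p ^ d) = z * w"
  proof -
    have "p ^ d = Suc (p ^ d - 1)" using p_pow_ge1[of d] by simp
    hence "z ^ (p ^ d) = z ^ Suc (p ^ d - 1)" by metis
    thus ?thesis unfolding w_def by simp
  qed
  have wpd: "w ^ (p ^ d) = w"
  proof -
    have "r dvd r ^ (j0 - 1)" using j0_2 by (simp add: dvd_power)
    hence "r dvd p ^ d - 1" using dv dvd_trans by blast
    then obtain c where c: "p ^ d - 1 = r * c" by blast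
    have "p ^ d = Suc (p ^ d - 1)" using p_pow_ge1[of d] by simp
    hence "w ^ (p ^ d) = w * w ^ (p ^ d - 1)" by (metis power_Suc)
    also have "w ^ (p ^ d - 1) = 1" unfolding c by (simp add: power_mult wr)
    finally show ?thesis by simp
  qed
  have inv: "Tr (z * w ^ s) = Tr z" for s
  proof (induction s)
    case 0 thus ?case by simp
  next
    case (Suc s)
    have "(z * w ^ s) ^ (p ^ d) = z * w ^ Suc s"
      using zpd wpd by (simp add: power_mult_distrib power_mult[symmetric] mult.commute[of s] power_mult)
    hence "Tr (z * w ^ Suc s) = Tr ((z * w ^ s) ^ (p ^ d))" by simp
    also have "\<dots> = Tr (z * w ^ s)" by (rule Tr_frob_pow)
    finally show ?case using Suc by simp
  qed
  have "0 = Tr (z * (\<Sum>s<r. w ^ s))" using geom_root_sum[OF wr w1] Tr_zero by simp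
  also have "\<dots> = (\<Sum>s<r. Tr (z * w ^ s))" by (simp add: sum_distrib_left Tr_sum)
  also have "\<dots> = of_nat r * Tr z" using inv by simp
  finally have "of_nat r * Tr z = 0" by simp
  moreover have "(of_nat r :: 'a) \<noteq> 0" using of_nat_eq0 r_not_p by simp
  ultimately show ?thesis by simp
qed

definition Iset :: "'a set" where "Iset = (\<lambda>x. x ^ t) ` (UNIV - {0})"

lemma image_f: "f ` (UNIV - {0}) = Tr ` Iset"
  unfolding Iset_def using f_eq2 by (auto simp: image_image)

lemma tN: "t * r ^ m = p ^ k - 1"
proof -
  have "[p ^ k = 1] (mod r^m)" using cong_k_iff by simp
  hence "r^m dvd p ^ k - 1" using p_pow_ge1 cong_altdef_nat by blast
  thus ?thesis unfolding t_def by simp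
qed

lemma I_N: "z \<in> Iset \<Longrightarrow> z ^ (r ^ m) = 1"
proof -
  assume "z \<in> Iset"
  then obtain x where x: "x \<noteq> 0" "z = x ^ t" unfolding Iset_def by auto
  have "z ^ (r ^ m) = x ^ (t * r ^ m)" unfolding x by (simp add: power_mult)
  also have "\<dots> = 1" unfolding tN using pow_q1[OF x(1)] .
  finally show ?thesis .
qed

lemma I_1: "1 \<in> Iset" unfolding Iset_def by (rule image_eqI[of _ _ 1]) auto

lemma I_pow: "z \<in> Iset \<Longrightarrow> z ^ n \<in> Iset"
proof -
  assume "z \<in> Iset"
  then obtain x where x: "x \<noteq> 0" "z = x ^ t" unfolding Iset_def by auto
  hence "z ^ n = (x ^ n) ^ t" by (simp add: power_mult[symmetric] mult.commute)
  moreover have "x ^ n \<noteq> 0" using x by simp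
  ultimately show ?thesis unfolding Iset_def by blast
qed

lemma I_big: "\<exists>z\<in>Iset. z ^ (r ^ (m - 1)) \<noteq> 1"
proof (rule ccontr)
  assume neg: "\<not> (\<exists>z\<in>Iset. z ^ (r ^ (m - 1)) \<noteq> 1)"
  have all: "x ^ (t * r ^ (m - 1)) = 1" if "x \<noteq> 0" for x :: 'a
  proof -
    have "x ^ t \<in> Iset" unfolding Iset_def using that by blast
    hence "(x ^ t) ^ (r ^ (m - 1)) = 1" using neg by blast
    thus ?thesis by (simp add: power_mult)
  qed
  define n where "n = t * r ^ (m - 1)"
  obtain m' where mm: "m = Suc m'" using m_pos by (cases m) auto
  have rm: "r ^ m = r * r ^ (m - 1)" unfolding mm by simp
  have "p ^ 1 \<le> p ^ k" using p_ge2 k_pos by (intro power_increasing) auto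
  hence pk: "p ^ k \<ge> 2" using p_ge2 by simp
  have tpos: "t > 0"
  proof (rule ccontr)
    assume "\<not> t > 0"
    hence "p ^ k - 1 = 0" using tN by simp
    thus False using pk by simp
  qed
  have npos: "n > 0" unfolding n_def using tpos r_ge5 by simp
  have nlt: "n < p ^ k - 1"
  proof -
    have "p ^ k - 1 = r * n" unfolding n_def using tN rm by (simp add: mult_ac)
    thus ?thesis using npos r_ge5 by simp
  qed
  define P where "P = monom (1::'a) n + [:-1:]"
  have degP: "degree P = n" unfolding P_def using npos
    by (subst degree_add_eq_left) (auto simp: degree_monom_eq)
  hence "P \<noteq> 0" using npos by auto
  hence "card {x. poly P x = 0} \<le> n" using card_poly_roots_bound degP by metis
  moreover have "UNIV - {0} \<subseteq> {x. poly P x = 0}"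
    unfolding P_def using all n_def by (auto simp: poly_monom)
  hence "card (UNIV - {0::'a}) \<le> card {x. poly P x = 0}" by (intro card_mono) auto
  moreover have "card (UNIV - {0::'a}) = p ^ k - 1" using card_q by (simp add: card_Diff_singleton)
  ultimately show False using nlt by simp
qed

end

lemma sq_eq_cases:
  fixes x y :: "'a::field"
  assumes "x * x = y * y" shows "x = y \<or> x = - y"
proof -
  have "(x - y) * (x + y) = 0" using assms by (simp add: algebra_simps)
  thus ?thesis by (auto simp: eq_neg_iff_add_eq_0)
qed

context fctx begin

lemma of_nat_r_ne0: "(of_nat r :: 'a) \<noteq> 0" using of_nat_eq0 r_not_p by simp

lemma c0_ne0: "(of_nat (r ^ (m-1)) :: 'a) \<noteq> 0"
  using of_nat_r_ne0 by simp

lemma r_odd_eq: "r = 2 * e + 1" using r_e r_ge5 by simp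

lemma card_values:
  "card (f ` (UNIV - {0})) = (if [r = 1] (mod p) then 2 else if m = 1 then 3 else 4)"
proof -
  define V where "V = Tr ` Iset"
  define c0 :: 'a where "c0 = of_nat (r ^ (m-1))"
  have c0: "c0 \<noteq> 0" unfolding c0_def using c0_ne0 .
  obtain z0 where z0: "z0 \<in> Iset" "z0 ^ (r ^ (m - 1)) \<noteq> 1" using I_big by blast
  define xi where "xi = z0 ^ (r ^ (m - 1))"
  obtain m' where mm: "m = Suc m'" using m_pos by (cases m) auto
  have rm: "r ^ m = r ^ (m - 1) * r" unfolding mm by simp
  have xiI: "xi \<in> Iset" unfolding xi_def using I_pow[OF z0(1)] .
  have xir: "xi ^ r = 1" unfolding xi_def using I_N[OF z0(1)] rm by (simp add: power_mult[symmetric])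
  have xi1: "xi \<noteq> 1" unfolding xi_def using z0 by simp
  obtain b where b: "b \<in> U" "chi b = -1" using nonres by blast
  have rb: "\<not> r dvd b" using b unfolding U_def by (auto dest: dvd_imp_le)
  have xibI: "xi ^ b \<in> Iset" using I_pow[OF xiI] .
  have "(xi ^ b) ^ r = (xi ^ r) ^ b" by (simp add: power_mult[symmetric] mult.commute)
  hence xibr: "(xi ^ b) ^ r = 1" using xir by simp
  have xib1: "xi ^ b \<noteq> 1" using z_pow_eq1[OF xir xi1] rb by simp
  define s0 where "s0 = S xi"
  define s1 where "s1 = S (xi ^ b)"
  have sum01: "s0 + s1 = -1" unfolding s0_def s1_def using S_pair[OF xir xi1 b] by simp
  have dif01: "(s0 - s1) * (s0 - s1) = of_nat r"
    unfolding s0_def s1_def using S_pair[OF xir xi1 b] gauss_sq[OF xir xi1] by simp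
  have q0: "(2 * s0 + 1) * (2 * s0 + 1) = of_nat r" unfolding s0_def using S_quadratic[OF xir xi1] .
  have q1: "(2 * s1 + 1) * (2 * s1 + 1) = of_nat r" unfolding s1_def using S_quadratic[OF xibr xib1] .
  have in1: "of_nat k \<in> V" unfolding V_def using I_1 Tr_one by force
  have in2: "c0 * s0 \<in> V" unfolding V_def c0_def s0_def using Tr_level1[OF xir] xiI by force
  have in3: "c0 * s1 \<in> V" unfolding V_def c0_def s1_def using Tr_level1[OF xibr] xibI by force
  have in4: "m \<ge> 2 \<Longrightarrow> 0 \<in> V"
  proof -
    assume m2: "m \<ge> 2"
    have "z0 ^ r \<noteq> 1"
    proof
      assume "z0 ^ r = 1"
      have "m - 1 = Suc (m - 2)" using m2 by simp
      hence "r ^ (m - 1) = r * r ^ (m - 2)" by simp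
      hence "z0 ^ (r ^ (m - 1)) = 1" using \<open>z0 ^ r = 1\<close> by (simp add: power_mult)
      thus False using z0 by simp
    qed
    hence "Tr z0 = 0" using Tr_high I_N[OF z0(1)] by simp
    thus "0 \<in> V" unfolding V_def using z0 by force
  qed
  have classify: "v \<in> V \<Longrightarrow> v = of_nat k \<or> (\<exists>z. z ^ r = 1 \<and> z \<noteq> 1 \<and> v = c0 * S z) \<or> (v = 0 \<and> m \<ge> 2)" for v
  proof -
    assume "v \<in> V"
    then obtain z where z: "z \<in> Iset" "v = Tr z" unfolding V_def by auto
    show ?thesis
    proof (cases "z = 1")
      case True thus ?thesis using z Tr_one by simp
    next
      case False
      show ?thesis
      proof (cases "z ^ r = 1")
        case True thus ?thesis using z False Tr_level1[OF True] c0_def by blast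
      next
        case nr: False
        have "Tr z = 0" using Tr_high[OF I_N[OF z(1)] nr] .
        moreover have "m \<ge> 2"
        proof (rule ccontr)
          assume "\<not> m \<ge> 2" hence "m = 1" using m_pos by simp
          thus False using I_N[OF z(1)] nr by simp
        qed
        ultimately show ?thesis using z by simp
      qed
    qed
  qed
  have Vf: "f ` (UNIV - {0}) = V" unfolding V_def using image_f .
  have finV: "finite V" by simp
  show ?thesis
  proof (cases "p = 2")
    case p2: True
    have "r mod 2 = 1" using r_odd_eq by presburger
    hence rc: "[r = 1] (mod p)" using p2 by (simp add: cong_def)
    have V01: "V \<subseteq> {0, 1}"
    proof
      fix v assume "v \<in> V"
      then obtain z where "v = Tr z" unfolding V_def by auto
      hence "v ^ 2 = v" using Tr_pow_p p2 by simp
      hence "v * (v - 1) = 0" by (simp add: algebra_simps power2_eq_square)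
      thus "v \<in> {0, 1}" by auto
    qed
    have two0: "(2::'a) = 0" using of_nat_eq0[of 2] p2 by simp
    have ne: "c0 * s0 \<noteq> c0 * s1"
    proof
      assume "c0 * s0 = c0 * s1"
      hence "s0 = s1" using c0 by simp
      hence "s0 + s0 = -1" using sum01 by simp
      moreover have "s0 + s0 = 2 * s0" by (rule mult_2[symmetric])
      ultimately have "2 * s0 = -1" by simp
      hence "(0::'a) = -1" using two0 by simp
      thus False by simp
    qed
    have "card {c0 * s0, c0 * s1} \<le> card V" using in2 in3 by (intro card_mono) auto
    hence "card V \<ge> 2" using ne by simp
    moreover have "card V \<le> card {0, 1::'a}" by (rule card_mono) (auto simp: V01)
    hence "card V \<le> 2" by simp
    ultimately show ?thesis using Vf rc by simp
  next
    case pn2: False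
    have two: "(2::'a) \<noteq> 0"
    proof
      assume "(2::'a) = 0"
      hence "(of_nat 2 :: 'a) = 0" by simp
      hence "p dvd 2" using of_nat_eq0 by blast
      hence "p \<le> 2" by (simp add: dvd_imp_le)
      thus False using p_ge2 pn2 by simp
    qed
    show ?thesis
    proof (cases "[r = 1] (mod p)")
      case rc: True
      have "p dvd r - 1" using rc r_ge5 by (simp add: cong_altdef_nat cong_sym_eq)
      hence R1: "(of_nat r :: 'a) = 1" using of_nat_eq0[of "r - 1"] r_ge5 by (simp add: of_nat_diff)
      have "p dvd 2 * e" using \<open>p dvd r - 1\<close> r_e by simp
      hence "p dvd 2 \<or> p dvd e" using p_prime prime_dvd_mult_iff by blast
      moreover have "\<not> p dvd 2"
      proof
        assume "p dvd 2" hence "p \<le> 2" by (simp add: dvd_imp_le)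
        thus False using p_ge2 pn2 by simp
      qed
      ultimately have "p dvd e" by blast
      hence "p dvd k" using k_eq by simp
      hence k0: "(of_nat k :: 'a) = 0" using of_nat_eq0 by simp
      have c01: "c0 = 1" unfolding c0_def using R1 by (simp add: of_nat_power)
      have sq1: "S z = 0 \<or> S z = -1" if "z ^ r = 1" "z \<noteq> 1" for z
      proof -
        have "(2 * S z + 1) * (2 * S z + 1) = 1 * 1" using S_quadratic[OF that] R1 by simp
        hence "2 * S z + 1 = 1 \<or> 2 * S z + 1 = - 1" using sq_eq_cases by blast
        thus ?thesis
        proof
          assume "2 * S z + 1 = 1"
          hence "2 * S z = 0" by simp
          thus ?thesis using two by simp
        next
          assume "2 * S z + 1 = - 1"
          hence "2 * S z = 2 * (- 1)" by (simp add: eq_neg_iff_add_eq_0 algebra_simps)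
          hence "S z = - 1" using mult_left_cancel[OF two] by blast
          thus ?thesis by simp
        qed
      qed
      have Vsub: "V \<subseteq> {0, -1}"
      proof
        fix v assume "v \<in> V"
        thus "v \<in> {0, -1}" using classify[of v] k0 c01 sq1 by auto
      qed
      have ne: "c0 * s0 \<noteq> c0 * s1"
      proof
        assume "c0 * s0 = c0 * s1"
        hence "s0 = s1" using c0 by simp
        hence "(of_nat r :: 'a) = 0" using dif01 by simp
        thus False using of_nat_r_ne0 by simp
      qed
      have "card {c0 * s0, c0 * s1} \<le> card V" using in2 in3 by (intro card_mono) auto
      hence "card V \<ge> 2" using ne by simp
      moreover have "card V \<le> card {0, -1::'a}" using Vsub by (intro card_mono) auto
      hence "card V \<le> 2" by simp
      ultimately show ?thesis using Vf rc by simp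
    next
      case rc: False
      have R1: "(of_nat r :: 'a) \<noteq> 1"
      proof
        assume "(of_nat r :: 'a) = 1"
        hence "(of_nat (r - 1) :: 'a) = 0" using r_ge5 by (simp add: of_nat_diff)
        hence "p dvd r - 1" using of_nat_eq0 by simp
        hence "[r = 1] (mod p)" using r_ge5 by (simp add: cong_altdef_nat cong_sym_eq)
        thus False using rc by simp
      qed
      have R0: "(of_nat r :: 'a) \<noteq> 0" using of_nat_r_ne0 .
      have ek: "(of_nat k :: 'a) = c0 * of_nat e" unfolding c0_def k_eq by simp
      have e0: "(of_nat e :: 'a) \<noteq> 0"
      proof
        assume "(of_nat e :: 'a) = 0"
        hence "p dvd e" using of_nat_eq0 by simp
        hence "p dvd r - 1" using r_e by simp
        hence "[r = 1] (mod p)" using r_ge5 by (simp add: cong_altdef_nat cong_sym_eq)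
        thus False using rc by simp
      qed
      have rE: "(of_nat r :: 'a) = 2 * of_nat e + 1" by (subst r_odd_eq) simp
      have s_ne0: "s \<noteq> 0" if "(2 * s + 1) * (2 * s + 1) = (of_nat r :: 'a)" for s
        using that R1 by auto
      have s_ne_e: "s \<noteq> of_nat e" if "(2 * s + 1) * (2 * s + 1) = (of_nat r :: 'a)" for s
      proof
        assume "s = of_nat e"
        hence "of_nat r * of_nat r = (of_nat r :: 'a)" using that rE by simp
        hence "of_nat r * (of_nat r - 1) = (0 :: 'a)" by (simp add: algebra_simps)
        thus False using R0 R1 by simp
      qed
      have s01: "s0 \<noteq> s1"
      proof
        assume "s0 = s1" hence "(of_nat r :: 'a) = 0" using dif01 by simp
        thus False using R0 by simp
      qed
      have lev1: "S z = s0 \<or> S z = s1" if "z ^ r = 1" "z \<noteq> 1" for z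
      proof -
        have "(2 * S z + 1) * (2 * S z + 1) = (2 * s0 + 1) * (2 * s0 + 1)" using S_quadratic[OF that] q0 by simp
        hence "2 * S z + 1 = 2 * s0 + 1 \<or> 2 * S z + 1 = - (2 * s0 + 1)" using sq_eq_cases by blast
        moreover have "- (2 * s0 + 1) = 2 * s1 + 1"
        proof -
          have "2 * s1 + 1 = 2 * (s0 + s1) - 2 * s0 + 1" by (simp add: algebra_simps)
          also have "\<dots> = 2 * (-1) - 2 * s0 + 1" by (simp only: sum01)
          also have "\<dots> = - (2 * s0 + 1)" by (simp add: algebra_simps)
          finally show ?thesis by simp
        qed
        ultimately have "2 * S z = 2 * s0 \<or> 2 * S z = 2 * s1" by auto
        thus ?thesis using mult_left_cancel[OF two] by blast
      qed
      define W where "W = {of_nat k, c0 * s0, c0 * s1} \<union> (if m \<ge> 2 then {0} else {})"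
      have VW: "V = W"
      proof
        show "V \<subseteq> W"
        proof
          fix v assume "v \<in> V"
          thus "v \<in> W" using classify[of v] lev1 unfolding W_def by auto
        qed
        show "W \<subseteq> V" unfolding W_def using in1 in2 in3 in4 by auto
      qed
      have d1: "of_nat k \<noteq> c0 * s0" "of_nat k \<noteq> c0 * s1"
        using ek c0 s_ne_e[OF q0] s_ne_e[OF q1] by auto
      have d2: "c0 * s0 \<noteq> c0 * s1" using s01 c0 by simp
      have d3: "of_nat k \<noteq> (0::'a)" "c0 * s0 \<noteq> 0" "c0 * s1 \<noteq> 0"
        using ek c0 e0 s_ne0[OF q0] s_ne0[OF q1] by auto
      have "card W = (if m = 1 then 3 else 4)"
      proof (cases "m \<ge> 2")
        case True
        hence "W = {of_nat k, c0 * s0, c0 * s1, 0}" unfolding W_def by auto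
        thus ?thesis using d1 d2 d3 True by simp
      next
        case False
        hence "W = {of_nat k, c0 * s0, c0 * s1}" "m = 1" unfolding W_def using m_pos by auto
        thus ?thesis using d1 d2 by simp
      qed
      thus ?thesis using Vf VW rc by simp
    qed
  qed
qed

end

theorem proposition4p8:
  fixes m r p :: nat and f :: "'a::{finite,field} \<Rightarrow> 'a"
  assumes "m > 0" and "prime r" and "r mod 4 = 1" and "prime p"
    and "ord (r ^ m) p = totient (r ^ m) div 2"
    and "card (UNIV::'a set) = p ^ (totient (r ^ m) div 2)"
    and "f = (\<lambda>x. trace_Fp p (totient (r ^ m) div 2) (x ^ ((card (UNIV::'a set) - 1) div r ^ m)))"
  shows "((induces_assoc_scheme f 2 \<longleftrightarrow> card (f ` (UNIV - {0})) = 2)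
           \<and> (card (f ` (UNIV - {0})) = 2 \<longleftrightarrow> [r = 1] (mod p)))
    \<and> ((induces_assoc_scheme f 3 \<longleftrightarrow> card (f ` (UNIV - {0})) = 3)
           \<and> (card (f ` (UNIV - {0})) = 3 \<longleftrightarrow> \<not> [r = 1] (mod p) \<and> m = 1))
    \<and> ((induces_assoc_scheme f 4 \<longleftrightarrow> card (f ` (UNIV - {0})) = 4)
           \<and> (card (f ` (UNIV - {0})) = 4 \<longleftrightarrow> \<not> [r = 1] (mod p) \<and> m > 1))"
proof -
  interpret fctx p r m f using assms by unfold_locales
  have sch: "induces_assoc_scheme f d \<longleftrightarrow> d = card (f ` (UNIV - {0}))" for d
    by (rule scheme_holds)
  have cv: "card (f ` (UNIV - {0})) = (if [r = 1] (mod p) then 2 else if m = 1 then 3 else 4)"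
    by (rule card_values)
  show ?thesis using m_pos unfolding sch cv by auto
qed

end
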